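(* Let $\omega\in\widehat{\mathcal D}$, $N\in\mathbb N$, $\alpha>0$ and $\mu=\omega\,\widehat\omega^{\alpha-1}$. Let $K=K(\omega)>1$ be such that $\{M_n\}_{n=0}^\infty$ is lacunary, and let $\{P_n\}_{n=0}^\infty$ be polynomials such that $f=\sum_{n=0}^\infty P_n\ast f$ for all $f\in\mathcal H(\mathbb D)$ and $\widehat{P_n}(j)=0$ for $j\notin[M_{n-1},M_{n+N})$ (with $M_{-1}=0$). Then for every admissible Banach space $X$, $$\|I^\mu(P_n\ast g)\|_X\asymp\mu_{M_n}\|P_n\ast g\|_X\asymp K^{-\alpha n}\|P_n\ast g\|_X,\qquad n\in\mathbb N\cup\{0\},\ g\in\mathcal H(\mathbb D),$$ with constants independent of $n$ and $g$.
   Context: A radial weight is a nonnegative $\omega\in L^1([0,1))$; $\widehat\omega(r)=\int_r^1\omega(s)ds>0$. $\omega\in\widehat{\mathcal D}$ means $\widehat\omega(r)\le C\widehat\omega(\frac{1+r}2)$ for some $C>0$ and all $0\le r<1$. $\mu_x=\int_0^1r^x\mu(r)dr$. For $K>1$, $r_n=\inf\{r\in[0,1):\widehat\omega(r)=\widehat\omega(0)K^{-n}\}$ and $M_n=E(\frac1{1-r_n})$ ($E$ = integer part); lacunary means $M_{n+1}\ge CM_n$ for some $C>1$ and all $n$. Hadamard product: $(f\ast g)(z)=\sum_k\widehat f(k)\widehat g(k)z^k$. For a radial weight $\mu$, $I^\mu g(z)=\sum_{n\ge0}\widehat g(n)\mu_{2n+1}z^n$. A quasi-normed space $X\subset\mathcal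 H(\mathbb D)$ is admissible if (1) convergence in $X$ implies uniform convergence on compact subsets of $\mathbb D$; (2) for each $r>1$, uniform convergence on compact subsets of $\{|z|<r\}$ implies convergence in $X$; (3) there is $C>0$ with $\|f_\zeta\|_X\le C\|f\|_X$ for all $f\in X$, $\zeta\in\overline{\mathbb D}$, where $f_\zeta(z)=f(\zeta z)$. *)

theory Defs
  imports "HOL-Complex_Analysis.Complex_Analysis" "HOL-Computational_Algebra.Polynomial"
begin

definition radial_weight :: "(real \<Rightarrow> real) \<Rightarrow> bool" where
  "radial_weight w \<longleftrightarrow> (\<forall>r\<in>{0..<1}. 0 \<le> w r) \<and> set_integrable lborel {0..<1::real} w"

definition omega_hat :: "(real \<Rightarrow> real) \<Rightarrow> real \<Rightarrow> real" where
  "omega_hat w r = (LBINT s:{r..<1}. w s)"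

definition is_radial_weight :: "(real \<Rightarrow> real) \<Rightarrow> bool" where
  "is_radial_weight w \<longleftrightarrow> radial_weight w \<and> (\<forall>r\<in>{0..<1}. omega_hat w r > 0)"

definition D_hat :: "(real \<Rightarrow> real) \<Rightarrow> bool" where
  "D_hat w \<longleftrightarrow> is_radial_weight w \<and>
     (\<exists>C>0. \<forall>r\<in>{0..<1}. omega_hat w r \<le> C * omega_hat w ((1 + r) / 2))"

text \<open>Moments mu_x = integral over [0,1) of r^x mu(r) (only natural x are needed).\<close>
definition moment :: "(real \<Rightarrow> real) \<Rightarrow> nat \<Rightarrow> real" where
  "moment m k = (LBINT r:{0..<1}. r ^ k * m r)"

definition r_seq :: "(real \<Rightarrow> real) \<Rightarrow> real \<Rightarrow> nat \<Rightarrow> real" where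
  "r_seq w K n = Inf {r\<in>{0..<1}. omega_hat w r = omega_hat w 0 * K powr (- real n)}"

definition M_seq :: "(real \<Rightarrow> real) \<Rightarrow> real \<Rightarrow> nat \<Rightarrow> nat" where
  "M_seq w K n = nat \<lfloor>1 / (1 - r_seq w K n)\<rfloor>"

definition M_prev :: "(real \<Rightarrow> real) \<Rightarrow> real \<Rightarrow> nat \<Rightarrow> nat" where
  "M_prev w K n = (if n = 0 then 0 else M_seq w K (n - 1))"

definition lacunary :: "(nat \<Rightarrow> nat) \<Rightarrow> bool" where
  "lacunary M \<longleftrightarrow> (\<exists>C>1. \<forall>n. real (M (Suc n)) \<ge> C * real (M n))"

definition tcoef :: "(complex \<Rightarrow> complex) \<Rightarrow> nat \<Rightarrow> complex" where
  "tcoef f k = (deriv ^^ k) f 0 / of_nat (fact k)"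

definition hadamard :: "complex poly \<Rightarrow> (complex \<Rightarrow> complex) \<Rightarrow> (complex \<Rightarrow> complex)" where
  "hadamard P f = (\<lambda>z. \<Sum>k\<le>degree P. coeff P k * tcoef f k * z ^ k)"

definition I_op :: "(real \<Rightarrow> real) \<Rightarrow> (complex \<Rightarrow> complex) \<Rightarrow> (complex \<Rightarrow> complex)" where
  "I_op m g = (\<lambda>z. \<Sum>n. tcoef g n * of_real (moment m (2 * n + 1)) * z ^ n)"

text \<open>Elements of a function space on the disc are represented canonically by
  functions vanishing outside the open unit disc.\<close>
definition diskr :: "(complex \<Rightarrow> complex) \<Rightarrow> (complex \<Rightarrow> complex)" where
  "diskr f = (\<lambda>z. if z \<in> ball 0 1 then f z else 0)"

definition admissible_banach :: "(complex \<Rightarrow> complex) set \<Rightarrow> ((complex \<Rightarrow> complex) \<Rightarrow> real) \<Rightarrow> bool" where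
  "admissible_banach X nX \<longleftrightarrow>
     \<comment> \<open>X is a space of analytic functions on the disc\<close>
     (\<forall>f\<in>X. f holomorphic_on ball 0 1 \<and> (\<forall>z. z \<notin> ball 0 1 \<longrightarrow> f z = 0)) \<and>
     \<comment> \<open>complex vector space\<close>
     (\<lambda>z. 0) \<in> X \<and>
     (\<forall>f\<in>X. \<forall>g\<in>X. (\<lambda>z. f z + g z) \<in> X) \<and>
     (\<forall>f\<in>X. \<forall>c. (\<lambda>z. c * f z) \<in> X) \<and>
     \<comment> \<open>norm\<close>
     (\<forall>f\<in>X. 0 \<le> nX f) \<and>
     (\<forall>f\<in>X. nX f = 0 \<longleftrightarrow> f = (\<lambda>z. 0)) \<and>
     (\<forall>f\<in>X. \<forall>c. nX (\<lambda>z. c * f z) = cmod c * nX f) \<and>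
     (\<forall>f\<in>X. \<forall>g\<in>X. nX (\<lambda>z. f z + g z) \<le> nX f + nX g) \<and>
     \<comment> \<open>completeness\<close>
     (\<forall>F. (\<forall>k. F k \<in> X) \<and>
          (\<forall>e>0. \<exists>N. \<forall>m\<ge>N. \<forall>n\<ge>N. nX (\<lambda>z. F m z - F n z) < e) \<longrightarrow>
          (\<exists>f\<in>X. (\<lambda>k. nX (\<lambda>z. F k z - f z)) \<longlonglongrightarrow> 0)) \<and>
     \<comment> \<open>(1) norm convergence implies locally uniform convergence in the disc\<close>
     (\<forall>F f. (\<forall>k. F k \<in> X) \<and> f \<in> X \<and> (\<lambda>k. nX (\<lambda>z. F k z - f z)) \<longlonglongrightarrow> 0 \<longrightarrow>
          (\<forall>K. compact K \<and> K \<subseteq> ball 0 1 \<longrightarrow> uniform_limit K F f sequentially)) \<and>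
     \<comment> \<open>(2) locally uniform convergence in a larger disc implies norm convergence\<close>
     (\<forall>r>1. \<forall>F f. (\<forall>k. F k holomorphic_on ball 0 r) \<and> f holomorphic_on ball 0 r \<and>
          (\<forall>K. compact K \<and> K \<subseteq> ball 0 r \<longrightarrow> uniform_limit K F f sequentially) \<longrightarrow>
          (\<forall>k. diskr (F k) \<in> X) \<and> diskr f \<in> X \<and>
          (\<lambda>k. nX (\<lambda>z. diskr (F k) z - diskr f z)) \<longlonglongrightarrow> 0) \<and>
     \<comment> \<open>(3) uniform boundedness of dilations\<close>
     (\<exists>C>0. \<forall>f\<in>X. \<forall>\<zeta>. cmod \<zeta> \<le> 1 \<longrightarrow>
          diskr (\<lambda>z. f (\<zeta> * z)) \<in> X \<and> nX (diskr (\<lambda>z. f (\<zeta> * z))) \<le> C * nX f)"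

end

theory Submission
  imports Defs
begin

definition pf :: "(nat \<Rightarrow> complex) \<Rightarrow> nat \<Rightarrow> complex \<Rightarrow> complex" where
  "pf c D = (\<lambda>z. \<Sum>j<D. c j * z ^ j)"

lemma pf_poly: "pf c D = poly (\<Sum>j<D. monom (c j) j)"
  by (auto simp: pf_def poly_sum poly_monom)

lemma deriv_funpow_poly: "(deriv ^^ k) (poly (p::complex poly)) = poly ((pderiv ^^ k) p)"
proof (induction k arbitrary: p)
  case 0 then show ?case by simp
next
  case (Suc k)
  have D: "deriv (poly q) = poly (pderiv q)" for q :: "complex poly"
    by (rule ext, rule DERIV_imp_deriv, rule poly_DERIV)
  have "(deriv ^^ Suc k) (poly p) = (deriv ^^ k) (deriv (poly p))"
    by (simp only: funpow_Suc_right o_apply)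
  also have "\<dots> = poly ((pderiv ^^ k) (pderiv p))" unfolding D by (rule Suc.IH)
  also have "\<dots> = poly ((pderiv ^^ Suc k) p)" by (simp only: funpow_Suc_right o_apply)
  finally show ?case .
qed

lemma tcoef_poly: "tcoef (poly p) n = coeff p n"
proof -
  have "(deriv ^^ n) (poly p) 0 = coeff ((pderiv ^^ n) p) 0"
    by (simp add: deriv_funpow_poly poly_0_coeff_0)
  also have "\<dots> = fact n * coeff p n"
    by (simp add: coeff_higher_pderiv pochhammer_fact)
  finally show ?thesis by (simp add: tcoef_def)
qed

lemma tcoef_pf: "tcoef (pf c D) n = (if n < D then c n else 0)"
  by (simp add: pf_poly tcoef_poly coeff_sum coeff_monom)

lemma pf_holo: "pf c D holomorphic_on S"
  unfolding pf_def by (intro holomorphic_intros)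

lemma pf_cong: "(\<And>j. j < D \<Longrightarrow> c j = d j) \<Longrightarrow> pf c D = pf d D"
  by (auto simp: pf_def)

lemma pf_extend:
  assumes "\<And>j. D \<le> j \<Longrightarrow> j < E \<Longrightarrow> c j = 0" "D \<le> E"
  shows "pf c E = pf c D"
  unfolding pf_def
proof (rule ext)
  fix z
  show "(\<Sum>j<E. c j * z ^ j) = (\<Sum>j<D. c j * z ^ j)"
    by (rule sum.mono_neutral_right) (use assms in auto)
qed

definition ee :: "nat \<Rightarrow> int \<Rightarrow> complex" where
  "ee m t = exp (2 * of_real pi * \<i> * of_int t / of_nat m)"

lemma ee_add: "ee m (a + b) = ee m a * ee m b"
  by (simp add: ee_def exp_add[symmetric] add_divide_distrib distrib_left)

lemma ee_mult_nat: "ee m (int k * t) = ee m t ^ k"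
proof -
  have "ee m (int k * t) = exp (of_nat k * (2 * of_real pi * \<i> * of_int t / of_nat m))"
    by (simp add: ee_def mult_ac)
  also have "\<dots> = ee m t ^ k" by (simp only: exp_of_nat_mult ee_def)
  finally show ?thesis .
qed

lemma ee_dvd: assumes "m > 0" "int m dvd t" shows "ee m t = 1"
proof -
  obtain q where q: "t = int m * q" using assms(2) by (auto elim: dvdE)
  have "2 * of_real pi * \<i> * of_int t / of_nat m = \<i> * (of_int (2*q) * of_real pi)"
    using assms(1) by (simp add: q field_simps)
  then show ?thesis unfolding ee_def by (simp only: exp_eq_1) simp
qed

lemma ee_ndvd: assumes "m > 0" "\<not> int m dvd t" shows "ee m t \<noteq> 1"
proof
  assume "ee m t = 1"
  then obtain n :: int where n: "Im (2 * of_real pi * \<i> * of_int t / of_nat m) = of_int (2 * n) * pi"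
    unfolding ee_def exp_eq_1 by blast
  have "Im (2 * of_real pi * \<i> * of_int t / of_nat m) = 2 * pi * t / m"
    by (simp add: Im_divide_of_nat)
  with n have "2 * pi * t / m = 2 * n * pi" by simp
  then have "real_of_int t = real m * n" using assms(1) pi_gt_zero
    by (simp add: field_simps)
  then have "t = int m * n" by (metis of_int_eq_iff of_int_mult of_int_of_nat_eq)
  then show False using assms(2) by simp
qed

lemma ee_cnj: "cnj (ee m t) = ee m (- t)"
  by (simp add: ee_def exp_cnj)

lemma ee_norm: "cmod (ee m t) = 1"
  by (simp add: ee_def norm_exp_eq_Re)

lemma ee_orth:
  assumes "m > 0"
  shows "(\<Sum>k<m. ee m (int k * t)) = (if int m dvd t then of_nat m else 0)"
proof (cases "int m dvd t")
  case True
  have "ee m (int k * t) = 1" for k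
    using True assms by (intro ee_dvd) auto
  then show ?thesis using True by simp
next
  case False
  have ne: "ee m t \<noteq> 1" using ee_ndvd[OF assms False] .
  have "ee m t ^ m = 1"
    using ee_mult_nat[of m m t, symmetric] ee_dvd[OF assms, of "int m * t"] by simp
  then have "(\<Sum>k<m. ee m t ^ k) = 0" by (simp add: geometric_sum[OF ne])
  then show ?thesis using False by (simp add: ee_mult_nat)
qed

lemma dvd_small_int: assumes "int m dvd x" "\<bar>x\<bar> < int m" shows "x = 0"
proof (rule ccontr)
  assume "x \<noteq> 0"
  obtain q where q: "x = int m * q" using assms(1) by (auto elim: dvdE)
  with \<open>x \<noteq> 0\<close> have "q \<noteq> 0" by auto
  then have "int m * 1 \<le> int m * \<bar>q\<bar>" by (intro mult_left_mono) auto
  then show False using assms(2) q by (simp add: abs_mult)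
qed

lemma fejer_coef:
  assumes "m > 0" "j + s < m"
  shows "(\<Sum>k<m. (\<Sum>i\<le>s. ee m (int k * int i)) * cnj (\<Sum>l\<le>s. ee m (int k * int l))
            * ee m (- (int k * int j))) = of_nat m * of_nat (s + 1 - j)"
proof -
  have "(\<Sum>k<m. (\<Sum>i\<le>s. ee m (int k * int i)) * cnj (\<Sum>l\<le>s. ee m (int k * int l))
            * ee m (- (int k * int j)))
      = (\<Sum>k<m. \<Sum>i\<le>s. \<Sum>l\<le>s. ee m (int k * (int i - int l - int j)))"
  proof (rule sum.cong[OF refl])
    fix k
    have "(\<Sum>i\<le>s. ee m (int k * int i)) * cnj (\<Sum>l\<le>s. ee m (int k * int l)) * ee m (- (int k * int j))
       = (\<Sum>i\<le>s. \<Sum>l\<le>s. ee m (int k * int i) * ee m (- (int k * int l)) * ee m (- (int k * int j)))"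
      by (simp add: ee_cnj sum_distrib_left sum_distrib_right) (rule sum.swap)
    also have "\<dots> = (\<Sum>i\<le>s. \<Sum>l\<le>s. ee m (int k * (int i - int l - int j)))"
      by (intro sum.cong refl) (simp add: ee_add[symmetric] algebra_simps)
    finally show "(\<Sum>i\<le>s. ee m (int k * int i)) * cnj (\<Sum>l\<le>s. ee m (int k * int l)) * ee m (- (int k * int j))
       = (\<Sum>i\<le>s. \<Sum>l\<le>s. ee m (int k * (int i - int l - int j)))" .
  qed
  also have "\<dots> = (\<Sum>i\<le>s. \<Sum>l\<le>s. \<Sum>k<m. ee m (int k * (int i - int l - int j)))"
    by (simp add: sum.swap[of _ "{..<m}"] sum.swap[of _ "{..<m}" "{..s}"])
  also have "\<dots> = (\<Sum>i\<le>s. \<Sum>l\<le>s. (if i = l + j then of_nat m else 0))"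
  proof (intro sum.cong refl)
    fix i l assume "i \<in> {..s}" "l \<in> {..s}"
    then have "\<bar>int i - int l - int j\<bar> < int m" using assms by auto
    then have "int m dvd (int i - int l - int j) \<longleftrightarrow> i = l + j"
    proof -
      assume A: "\<bar>int i - int l - int j\<bar> < int m"
      show ?thesis
      proof
        assume "int m dvd (int i - int l - int j)"
        from dvd_small_int[OF this A] show "i = l + j" by simp
      qed simp
    qed
    then show "(\<Sum>k<m. ee m (int k * (int i - int l - int j))) = (if i = l + j then of_nat m else 0)"
      by (simp add: ee_orth[OF assms(1)])
  qed
  also have "\<dots> = (\<Sum>l\<le>s. \<Sum>i\<le>s. (if i = l + j then of_nat m else 0))"
    by (rule sum.swap)
  also have "\<dots> = (\<Sum>l\<le>s. (if l + j \<le> s then of_nat m else 0))"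
    by (intro sum.cong refl) (simp add: sum.delta)
  also have "\<dots> = of_nat m * of_nat (card {l. l \<le> s \<and> l + j \<le> s})"
    by (simp add: sum.If_cases Int_def conj_commute)
  also have "{l. l \<le> s \<and> l + j \<le> s} = {..<s + 1 - j}" by auto
  finally show ?thesis by simp
qed

lemma fejer_op:
  assumes "m > 0" "s + D < m"
  shows "pf (\<lambda>j. of_nat (s + 1 - j) * c j) D z =
     (\<Sum>k<m. ((\<Sum>i\<le>s. ee m (int k * int i)) * cnj (\<Sum>l\<le>s. ee m (int k * int l)) / of_nat m)
               * pf c D (ee m (- int k) * z))"
proof -
  define W where "W k = (\<Sum>i\<le>s. ee m (int k * int i)) * cnj (\<Sum>l\<le>s. ee m (int k * int l))" for k
  have "(\<Sum>k<m. (W k / of_nat m) * pf c D (ee m (- int k) * z))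
      = (\<Sum>k<m. \<Sum>j<D. (W k / of_nat m) * (c j * ee m (- (int k * int j)) * z ^ j))"
    unfolding pf_def
    by (intro sum.cong refl) (simp add: sum_distrib_left power_mult_distrib ee_mult_nat[symmetric] mult_ac)
  also have "\<dots> = (\<Sum>j<D. c j * z ^ j * ((\<Sum>k<m. W k * ee m (- (int k * int j))) / of_nat m))"
    by (subst sum.swap) (simp add: sum_distrib_left sum_divide_distrib mult_ac)
  also have "\<dots> = (\<Sum>j<D. of_nat (s + 1 - j) * c j * z ^ j)"
  proof (intro sum.cong refl)
    fix j assume "j \<in> {..<D}"
    then have "j + s < m" using assms by auto
    from fejer_coef[OF assms(1) this]
    show "c j * z ^ j * ((\<Sum>k<m. W k * ee m (- (int k * int j))) / of_nat m) = of_nat (s + 1 - j) * c j * z ^ j"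
      using assms(1) by (simp add: W_def)
  qed
  finally show ?thesis by (simp add: pf_def W_def)
qed

lemma X_pf:
  assumes hX: "admissible_banach X nX"
  shows "diskr (pf c D) \<in> X"
proof -
  have "\<forall>r>1. \<forall>F f. (\<forall>k. F k holomorphic_on ball 0 r) \<and> f holomorphic_on ball 0 r \<and>
          (\<forall>K. compact K \<and> K \<subseteq> ball 0 r \<longrightarrow> uniform_limit K F f sequentially) \<longrightarrow>
          (\<forall>k. diskr (F k) \<in> X) \<and> diskr f \<in> X \<and>
          (\<lambda>k. nX (\<lambda>z. diskr (F k) z - diskr f z)) \<longlonglongrightarrow> 0"
    using hX unfolding admissible_banach_def by blast
  note R = this
  have H: "(\<forall>k. (\<lambda>k. pf c D) k holomorphic_on ball 0 2) \<and> pf c D holomorphic_on ball 0 2 \<and>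
     (\<forall>K. compact K \<and> K \<subseteq> ball 0 2 \<longrightarrow> uniform_limit K (\<lambda>k. pf c D) (pf c D) sequentially)"
    using pf_holo uniform_limit_const by auto
  show ?thesis using R[rule_format, OF _ H] by simp
qed

lemma adm_zero: "admissible_banach X nX \<Longrightarrow> (\<lambda>z. 0) \<in> X \<and> nX (\<lambda>z. 0) = 0"
  unfolding admissible_banach_def by (elim conjE) simp

lemma adm_add: "admissible_banach X nX \<Longrightarrow> f \<in> X \<Longrightarrow> g \<in> X \<Longrightarrow>
   (\<lambda>z. f z + g z) \<in> X \<and> nX (\<lambda>z. f z + g z) \<le> nX f + nX g"
  unfolding admissible_banach_def by (elim conjE) simp

lemma adm_scal: "admissible_banach X nX \<Longrightarrow> f \<in> X \<Longrightarrow>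
   (\<lambda>z. c * f z) \<in> X \<and> nX (\<lambda>z. c * f z) = cmod c * nX f"
  unfolding admissible_banach_def by (elim conjE) simp

lemma adm_nonneg: "admissible_banach X nX \<Longrightarrow> f \<in> X \<Longrightarrow> 0 \<le> nX f"
  unfolding admissible_banach_def by (elim conjE) simp

lemma X_lincomb:
  assumes hX: "admissible_banach X nX" and fin: "finite S" and h: "\<And>k. k \<in> S \<Longrightarrow> h k \<in> X"
  shows "(\<lambda>z. \<Sum>k\<in>S. a k * h k z) \<in> X \<and> nX (\<lambda>z. \<Sum>k\<in>S. a k * h k z) \<le> (\<Sum>k\<in>S. cmod (a k) * nX (h k))"
  using fin h
proof (induction S rule: finite_induct)
  case empty
  show ?case using adm_zero[OF hX] by simp
next
  case (insert x F)
  have IH: "(\<lambda>z. \<Sum>k\<in>F. a k * h k z) \<in> X" "nX (\<lambda>z. \<Sum>k\<in>F. a k * h k z) \<le> (\<Sum>k\<in>F. cmod (a k) * nX (h k))"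
    using insert by auto
  have hx: "h x \<in> X" using insert by auto
  have sc: "(\<lambda>z. a x * h x z) \<in> X" "nX (\<lambda>z. a x * h x z) = cmod (a x) * nX (h x)"
    using adm_scal[OF hX hx] by auto
  have eq: "(\<lambda>z. \<Sum>k\<in>insert x F. a k * h k z) = (\<lambda>z. (\<lambda>z. a x * h x z) z + (\<lambda>z. \<Sum>k\<in>F. a k * h k z) z)"
    using insert by auto
  note ad = adm_add[OF hX sc(1) IH(1)]
  from ad have "(\<lambda>z. (\<lambda>z. a x * h x z) z + (\<lambda>z. \<Sum>k\<in>F. a k * h k z) z) \<in> X" by simp
  moreover from ad have "nX (\<lambda>z. (\<lambda>z. a x * h x z) z + (\<lambda>z. \<Sum>k\<in>F. a k * h k z) z)
      \<le> nX (\<lambda>z. a x * h x z) + nX (\<lambda>z. \<Sum>k\<in>F. a k * h k z)" by simp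
  ultimately show ?case using eq sc(2) IH(2) insert by simp
qed

lemma diskr_dil:
  assumes "cmod \<zeta> \<le> 1"
  shows "diskr (\<lambda>z. diskr f (\<zeta> * z)) = diskr (\<lambda>z. f (\<zeta> * z))"
proof
  fix z
  show "diskr (\<lambda>z. diskr f (\<zeta> * z)) z = diskr (\<lambda>z. f (\<zeta> * z)) z"
  proof (cases "z \<in> ball 0 1")
    case True
    then have "cmod (\<zeta> * z) < 1" using assms
      by (simp add: norm_mult) (metis mult_le_cancel_right1 norm_ge_zero order_le_less_trans mult.commute mult_left_le_one_le)
    then show ?thesis using True by (simp add: diskr_def)
  qed (simp add: diskr_def)
qed

lemma fejer_norm:
  assumes hX: "admissible_banach X nX"
    and hC: "\<forall>f\<in>X. \<forall>\<zeta>. cmod \<zeta> \<le> 1 \<longrightarrow> diskr (\<lambda>z. f (\<zeta> * z)) \<in> X \<and> nX (diskr (\<lambda>z. f (\<zeta> * z))) \<le> C * nX f"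
  shows "diskr (pf (\<lambda>j. of_nat (s + 1 - j) * c j) D) \<in> X \<and>
         nX (diskr (pf (\<lambda>j. of_nat (s + 1 - j) * c j) D)) \<le> C * of_nat (s + 1) * nX (diskr (pf c D))"
proof -
  define m where "m = s + D + 1"
  have m: "m > 0" "s + D < m" by (auto simp: m_def)
  define S where "S k = (\<Sum>i\<le>s. ee m (int k * int i))" for k
  define h where "h k = diskr (\<lambda>z. pf c D (ee m (- int k) * z))" for k
  have p: "diskr (pf c D) \<in> X" by (rule X_pf[OF hX])
  have hk: "h k \<in> X \<and> nX (h k) \<le> C * nX (diskr (pf c D))" for k
  proof -
    have "cmod (ee m (- int k)) \<le> 1" by (simp add: ee_norm)
    then show ?thesis using hC p unfolding h_def by (metis diskr_dil)
  qed
  have eq: "diskr (pf (\<lambda>j. of_nat (s + 1 - j) * c j) D) = (\<lambda>z. \<Sum>k<m. (S k * cnj (S k) / of_nat m) * h k z)"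
  proof
    fix z
    show "diskr (pf (\<lambda>j. of_nat (s + 1 - j) * c j) D) z = (\<Sum>k<m. (S k * cnj (S k) / of_nat m) * h k z)"
    proof (cases "z \<in> ball 0 1")
      case True
      then show ?thesis unfolding diskr_def h_def S_def using fejer_op[OF m, of c z] by simp
    next
      case False
      then show ?thesis by (simp add: diskr_def h_def)
    qed
  qed
  have L: "(\<lambda>z. \<Sum>k<m. (S k * cnj (S k) / of_nat m) * h k z) \<in> X \<and>
     nX (\<lambda>z. \<Sum>k<m. (S k * cnj (S k) / of_nat m) * h k z) \<le> (\<Sum>k<m. cmod (S k * cnj (S k) / of_nat m) * nX (h k))"
    by (rule X_lincomb[OF hX]) (use hk in auto)
  have "(\<Sum>k<m. cmod (S k * cnj (S k) / of_nat m) * nX (h k))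
      \<le> (\<Sum>k<m. cmod (S k * cnj (S k) / of_nat m) * (C * nX (diskr (pf c D))))"
    by (intro sum_mono mult_left_mono) (use hk in auto)
  also have "\<dots> = (\<Sum>k<m. (cmod (S k))^2) / of_nat m * (C * nX (diskr (pf c D)))"
    by (simp add: sum_distrib_right sum_divide_distrib norm_mult norm_divide power2_eq_square)
  also have "(\<Sum>k<m. (cmod (S k))^2) = of_nat (s + 1) * of_nat m"
  proof -
    have "complex_of_real (\<Sum>k<m. (cmod (S k))^2) = (\<Sum>k<m. S k * cnj (S k))"
      by (simp add: complex_norm_square[symmetric])
    also have "\<dots> = (\<Sum>k<m. S k * cnj (S k) * ee m (- (int k * int 0)))"
      by (simp add: ee_def)
    also have "\<dots> = of_nat m * of_nat (s + 1)"
      using fejer_coef[OF m(1), of 0 s] m by (simp add: S_def)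
    finally have "complex_of_real (\<Sum>k<m. (cmod (S k))^2) = complex_of_real (of_nat (s + 1) * of_nat m)"
      by simp
    then show ?thesis by (simp only: of_real_eq_iff)
  qed
  finally have F: "(\<Sum>k<m. cmod (S k * cnj (S k) / of_nat m) * nX (h k))
     \<le> of_nat (s + 1) * of_nat m / of_nat m * (C * nX (diskr (pf c D)))" .
  have G: "(\<Sum>k<m. cmod (S k * cnj (S k) / of_nat m) * nX (h k)) \<le> C * of_nat (s + 1) * nX (diskr (pf c D))"
    using F m by (simp add: mult_ac)
  have N: "nX (\<lambda>z. \<Sum>k<m. (S k * cnj (S k) / of_nat m) * h k z) \<le> C * of_nat (s + 1) * nX (diskr (pf c D))"
    using conjunct2[OF L] G by (rule order_trans)
  show ?thesis unfolding eq by (rule conjI[OF conjunct1[OF L] N])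
qed

lemma mult_lemma:
  assumes hX: "admissible_banach X nX"
    and hC: "\<forall>f\<in>X. \<forall>\<zeta>. cmod \<zeta> \<le> 1 \<longrightarrow> diskr (\<lambda>z. f (\<zeta> * z)) \<in> X \<and> nX (diskr (\<lambda>z. f (\<zeta> * z))) \<le> C * nX f"
    and rep: "\<And>j. j < D \<Longrightarrow> lam j = (\<Sum>s\<le>B. of_nat (s + 1 - j) * E s)"
  shows "nX (diskr (pf (\<lambda>j. complex_of_real (lam j) * c j) D))
         \<le> C * (\<Sum>s\<le>B. of_nat (s + 1) * \<bar>E s\<bar>) * nX (diskr (pf c D))"
proof -
  define h where "h s = diskr (pf (\<lambda>j. of_nat (s + 1 - j) * c j) D)" for s
  have hs: "h s \<in> X \<and> nX (h s) \<le> C * of_nat (s + 1) * nX (diskr (pf c D))" for s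
    unfolding h_def by (rule fejer_norm[OF hX hC])
  have eq: "diskr (pf (\<lambda>j. complex_of_real (lam j) * c j) D) = (\<lambda>z. \<Sum>s\<le>B. complex_of_real (E s) * h s z)"
  proof
    fix z
    have "pf (\<lambda>j. complex_of_real (lam j) * c j) D z = (\<Sum>j<D. \<Sum>s\<le>B. complex_of_real (E s) * (of_nat (s + 1 - j) * c j * z ^ j))"
      unfolding pf_def
      by (intro sum.cong refl) (simp add: rep sum_distrib_right sum_distrib_left mult_ac)
    also have "\<dots> = (\<Sum>s\<le>B. complex_of_real (E s) * pf (\<lambda>j. of_nat (s + 1 - j) * c j) D z)"
      unfolding pf_def by (subst sum.swap) (simp add: sum_distrib_left)
    finally show "diskr (pf (\<lambda>j. complex_of_real (lam j) * c j) D) z = (\<Sum>s\<le>B. complex_of_real (E s) * h s z)"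
      by (simp add: diskr_def h_def)
  qed
  have "nX (\<lambda>z. \<Sum>s\<le>B. complex_of_real (E s) * h s z) \<le> (\<Sum>s\<le>B. cmod (complex_of_real (E s)) * nX (h s))"
    using X_lincomb[OF hX, of "{..B}" h "\<lambda>s. complex_of_real (E s)"] hs by auto
  also have "\<dots> \<le> (\<Sum>s\<le>B. \<bar>E s\<bar> * (C * of_nat (s + 1) * nX (diskr (pf c D))))"
    using hs by (auto intro!: sum_mono mult_left_mono)
  also have "\<dots> = C * (\<Sum>s\<le>B. of_nat (s + 1) * \<bar>E s\<bar>) * nX (diskr (pf c D))"
    by (simp add: sum_distrib_left sum_distrib_right mult_ac)
  finally have R: "nX (\<lambda>z. \<Sum>s\<le>B. complex_of_real (E s) * h s z) \<le> C * (\<Sum>s\<le>B. of_nat (s + 1) * \<bar>E s\<bar>) * nX (diskr (pf c D))" .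
  show ?thesis unfolding eq by (rule R)
qed

lemma set_int_nonneg:
  fixes f :: "'a \<Rightarrow> real"
  assumes "\<And>x. x \<in> A \<Longrightarrow> 0 \<le> f x"
  shows "0 \<le> (LINT x:A|M. f x)"
  unfolding set_lebesgue_integral_def
  by (intro integral_nonneg_AE AE_I2) (use assms in \<open>auto simp: indicator_def\<close>)

locale wt =
  fixes w :: "real \<Rightarrow> real" and K \<alpha> :: real
  assumes Dh: "D_hat w" and K1: "K > 1" and apos: "\<alpha> > 0" and lac: "lacunary (M_seq w K)"
begin

abbreviation W where "W \<equiv> omega_hat w"
abbreviation r where "r \<equiv> r_seq w K"
abbreviation M where "M \<equiv> M_seq w K"
definition t where "t n = W 0 * K powr (- real n)"

lemma w_nonneg: "x \<in> {0..<1} \<Longrightarrow> 0 \<le> w x"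
  using Dh by (auto simp: D_hat_def is_radial_weight_def radial_weight_def)

lemma w_int: "set_integrable lborel {0..<1::real} w"
  using Dh by (auto simp: D_hat_def is_radial_weight_def radial_weight_def)

lemma W_pos: "x \<in> {0..<1} \<Longrightarrow> W x > 0"
  using Dh by (auto simp: D_hat_def is_radial_weight_def)

lemma w_int_sub: "0 \<le> a \<Longrightarrow> b \<le> 1 \<Longrightarrow> set_integrable lborel {a..<b} w"
  by (rule set_integrable_subset[OF w_int]) auto

lemma W_split:
  assumes "0 \<le> a" "a \<le> b" "b \<le> 1"
  shows "W a = (LBINT s:{a..<b}. w s) + W b"
proof -
  have "{a..<1} = {a..<b} \<union> {b..<1}" using assms by auto
  then have "W a = (LBINT s:{a..<b} \<union> {b..<1}. w s)" by (simp add: omega_hat_def)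
  also have "\<dots> = (LBINT s:{a..<b}. w s) + (LBINT s:{b..<1}. w s)"
    by (rule set_integral_Un) (use assms in \<open>auto intro: w_int_sub\<close>)
  finally show ?thesis by (simp add: omega_hat_def)
qed

lemma W_mono: "0 \<le> a \<Longrightarrow> a \<le> b \<Longrightarrow> b \<le> 1 \<Longrightarrow> W b \<le> W a"
  using W_split[of a b] set_int_nonneg[of "{a..<b}" w lborel] w_nonneg by auto

lemma W_1: "W 1 = 0"
  by (simp add: omega_hat_def set_lebesgue_integral_def)

lemma W_HK:
  assumes "0 \<le> x" "x \<le> 1"
  shows "W x = integral {x..1} w"
proof -
  have si: "set_integrable lborel {x..<1} w" using assms by (intro w_int_sub) auto
  have "W x = integral {x..<1} w"
    unfolding omega_hat_def by (rule set_borel_integral_eq_integral(2)[OF si])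
  also have "\<dots> = integral {x..1} w"
    by (rule integral_spike_set) (auto intro: negligible_subset[of "{1}"])
  finally show ?thesis .
qed

lemma w_HK_int: "w integrable_on {0..1}"
proof -
  have "w integrable_on {0..<1}" by (rule set_borel_integral_eq_integral(1)[OF w_int])
  then show ?thesis
    by (rule integrable_spike_set) (auto intro: negligible_subset[of "{1}"])
qed

lemma W_cont: "continuous_on {0..1} W"
proof -
  have "continuous_on {0..1} (\<lambda>x. integral {x..1} w)"
    by (rule indefinite_integral_continuous_1'[OF w_HK_int])
  then show ?thesis by (rule continuous_on_eq) (simp add: W_HK)
qed

lemma W0_pos: "W 0 > 0" using W_pos by simp

lemma t_pos: "t n > 0" using W0_pos K1 by (simp add: t_def)

lemma t_le: "t n \<le> W 0"
proof -
  have "1 \<le> K powr real n" using K1 by (intro ge_one_powr_ge_zero) auto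
  then have "K powr (- real n) \<le> 1" by (simp add: powr_minus inverse_le_1_iff)
  then show ?thesis using W0_pos unfolding t_def by (simp add: mult_left_le)
qed

lemma t_Suc: "t (Suc n) = t n / K"
proof -
  have "K powr (- real (Suc n)) = K powr (- real n + (-1))" by (simp add: algebra_simps)
  also have "\<dots> = K powr (- real n) * K powr (-1)" by (rule powr_add)
  also have "K powr (-1) = inverse K" using K1 by (simp add: powr_minus)
  finally show ?thesis by (simp add: t_def divide_inverse mult_ac)
qed

definition Sset where "Sset n = {x \<in> {0..<1}. W x = W 0 * K powr (- real n)}"

lemma Sset_eq: "Sset n = {x \<in> {0..1}. W x = t n}"
proof -
  have "x \<noteq> 1" if "W x = t n" for x using that t_pos[of n] W_1 by auto
  then show ?thesis by (force simp: Sset_def t_def)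
qed

lemma Sset_ne: "Sset n \<noteq> {}"
proof -
  have "\<exists>x. 0 \<le> x \<and> x \<le> 1 \<and> W x = t n"
    by (rule IVT2') (use W_1 t_pos[of n] t_le[of n] W_cont in auto)
  then show ?thesis unfolding Sset_eq by auto
qed

lemma r_def': "r n = Inf (Sset n)"
  by (simp add: r_seq_def Sset_def)

lemma r_in: "r n \<in> Sset n"
proof -
  have "closed (Sset n)" unfolding Sset_eq
    by (rule continuous_closed_preimage_constant[OF W_cont]) simp
  moreover have "bdd_below (Sset n)" unfolding Sset_def by (auto intro: bdd_belowI[of _ 0])
  ultimately show ?thesis unfolding r_def' using Sset_ne closed_contains_Inf by blast
qed

lemma r_range: "0 \<le> r n" "r n < 1"
  using r_in[of n] by (auto simp: Sset_def)

lemma W_r: "W (r n) = t n"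
  using r_in[of n] by (auto simp: Sset_eq)

lemma W_before_r:
  assumes "0 \<le> x" "x < r n"
  shows "W x > t n"
proof (rule ccontr)
  assume "\<not> W x > t n"
  then have "W x \<le> t n" by simp
  then have "\<exists>y. 0 \<le> y \<and> y \<le> x \<and> W y = t n"
    by (intro IVT2') (use assms t_le[of n] r_range[of n] in \<open>auto intro: continuous_on_subset[OF W_cont]\<close>)
  then obtain y where y: "0 \<le> y" "y \<le> x" "W y = t n" by blast
  then have "y \<in> Sset n" using assms r_range[of n] unfolding Sset_eq by auto
  then have "r n \<le> y" unfolding r_def'
    by (intro cInf_lower) (auto simp: Sset_def intro: bdd_belowI[of _ 0])
  then show False using y assms by simp
qed

lemma W_after_r: "r n \<le> x \<Longrightarrow> x \<le> 1 \<Longrightarrow> W x \<le> t n"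
  using W_mono[of "r n" x] r_range[of n] W_r[of n] by simp

lemma r0: "r 0 = 0"
proof -
  have "0 \<in> Sset 0" using K1 by (simp add: Sset_def)
  then have "r 0 \<le> 0" unfolding r_def' by (intro cInf_lower) (auto simp: Sset_def intro: bdd_belowI[of _ 0])
  then show ?thesis using r_range[of 0] by simp
qed

lemma r_less: "r n < r (Suc n)"
proof (rule ccontr)
  assume "\<not> r n < r (Suc n)"
  then have "W (r n) \<le> W (r (Suc n))" using W_mono[of "r (Suc n)" "r n"] r_range[of n] r_range[of "Suc n"] by simp
  then have "t n \<le> t n / K" using W_r t_Suc by simp
  then show False using t_pos[of n] K1 by (simp add: divide_le_eq field_simps)
qed

lemma r_mono: "m \<le> n \<Longrightarrow> r m \<le> r n"
  by (rule lift_Suc_mono_le[of r]) (auto intro: less_imp_le r_less)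

lemma M_eq: "M n = nat \<lfloor>1 / (1 - r n)\<rfloor>" by (simp add: M_seq_def)

lemma M_facts: "1 \<le> M n" "1 - r n \<le> 1 / real (M n)" "1 / (2 * real (M n)) < 1 - r n"
proof -
  define x where "x = 1 / (1 - r n)"
  have d: "0 < 1 - r n" "1 - r n \<le> 1" using r_range[of n] by auto
  have x1: "x \<ge> 1" using d by (simp add: x_def)
  have fl: "real_of_int \<lfloor>x\<rfloor> \<le> x" "x < real_of_int \<lfloor>x\<rfloor> + 1" by linarith+
  have fl1: "\<lfloor>x\<rfloor> \<ge> 1" using x1 by linarith
  have Mx: "real (M n) = real_of_int \<lfloor>x\<rfloor>" unfolding M_eq x_def[symmetric]
    by (rule of_nat_nat) (use fl1 in linarith)
  show "1 \<le> M n" using Mx fl1 by linarith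
  have "real (M n) \<le> 1 / (1 - r n)" using Mx fl by (simp add: x_def)
  then show "1 - r n \<le> 1 / real (M n)" using d \<open>1 \<le> M n\<close> by (simp add: field_simps)
  have "x < 2 * real (M n)" using Mx fl fl1 by linarith
  then have "1 / (1 - r n) < 2 * real (M n)" by (simp add: x_def)
  then show "1 / (2 * real (M n)) < 1 - r n" using d \<open>1 \<le> M n\<close> by (simp add: field_simps)
qed

definition Cl where "Cl = (SOME C. C > 1 \<and> (\<forall>n. real (M (Suc n)) \<ge> C * real (M n)))"

lemma Cl: "Cl > 1" "real (M (Suc n)) \<ge> Cl * real (M n)"
proof -
  have "\<exists>C. C > 1 \<and> (\<forall>n. real (M (Suc n)) \<ge> C * real (M n))" using lac by (simp add: lacunary_def)
  then have "Cl > 1 \<and> (\<forall>n. real (M (Suc n)) \<ge> Cl * real (M n))" unfolding Cl_def by (rule someI_ex)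
  then show "Cl > 1" "real (M (Suc n)) \<ge> Cl * real (M n)" by auto
qed

lemma M_lac_pow: "real (M (n + j)) \<ge> Cl ^ j * real (M n)"
proof (induction j)
  case 0 then show ?case by simp
next
  case (Suc j)
  have "Cl ^ Suc j * real (M n) = Cl * (Cl ^ j * real (M n))" by simp
  also have "\<dots> \<le> Cl * real (M (n + j))" using Suc Cl(1) by (intro mult_left_mono) auto
  also have "\<dots> \<le> real (M (Suc (n + j)))" using Cl(2) .
  finally show ?case by simp
qed

lemma M_mono: "m \<le> n \<Longrightarrow> M m \<le> M n"
proof -
  assume "m \<le> n"
  then obtain j where "n = m + j" using le_Suc_ex by blast
  have "1 \<le> Cl ^ j" using Cl(1) by simp
  then have "1 * real (M m) \<le> Cl ^ j * real (M m)" by (intro mult_right_mono) auto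
  then show "M m \<le> M n" using M_lac_pow[where n=m and j=j] \<open>n = m + j\<close> by (simp add: of_nat_le_iff[symmetric] del: of_nat_le_iff)
qed

lemma M_strict: "M n < M (Suc n)"
proof -
  have "1 * real (M n) < Cl * real (M n)" using Cl(1) M_facts(1)[of n] by (intro mult_strict_right_mono) auto
  then show ?thesis using Cl(2)[of n] by simp
qed

lemma r_exceeds: assumes "x < 1" shows "\<exists>n. x < r n"
proof -
  from real_arch_pow[OF Cl(1), of "1 / (1 - x)"] obtain j where j: "1 / (1 - x) < Cl ^ j" by blast
  have "Cl ^ j * 1 \<le> Cl ^ j * real (M 0)" using M_facts(1)[of 0] Cl(1) by (intro mult_left_mono) auto
  then have "Cl ^ j \<le> real (M j)" using M_lac_pow[where n=0 and j=j] by simp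
  then have "1 - r j \<le> 1 / real (M j)" "1 / (1 - x) < real (M j)" using M_facts(2) j by auto
  moreover have "1 / real (M j) < 1 - x"
  proof -
    have "0 < 1 - x" using assms by simp
    then have "0 < 1 / (1 - x)" by simp
    with \<open>1 / (1 - x) < real (M j)\<close> have "1 / real (M j) < 1 / (1 / (1 - x))"
      using M_facts(1)[of j] by (intro divide_strict_left_mono) auto
    then show ?thesis by simp
  qed
  ultimately have "1 - r j < 1 - x" by linarith
  then show ?thesis by auto
qed

end

lemma set_integrable_cong_on:
  fixes f g :: "real \<Rightarrow> real"
  assumes "set_integrable M A f" "\<And>x. x \<in> A \<Longrightarrow> f x = g x"
  shows "set_integrable M A g"
proof -
  have "(\<lambda>x. indicator A x *\<^sub>R f x) = (\<lambda>x. indicator A x *\<^sub>R g x)"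
    using assms(2) by (auto simp: indicator_def)
  then show ?thesis using assms(1) unfolding set_integrable_def by simp
qed

lemma powr_band:
  fixes t K x e :: real
  assumes "0 < t" "1 < K" "t / K \<le> x" "x \<le> t"
  shows "x powr e \<le> t powr e * K powr \<bar>e\<bar>" "t powr e * K powr (- \<bar>e\<bar>) \<le> x powr e"
proof -
  have x0: "0 < x" using assms by (smt (verit) divide_pos_pos)
  have tK: "(t / K) powr e = t powr e * K powr (- e)"
    using assms by (subst powr_divide) (auto simp: powr_minus divide_inverse)
  have K1: "1 \<le> K powr \<bar>e\<bar>" using assms by (intro ge_one_powr_ge_zero) auto
  have K2: "K powr (- \<bar>e\<bar>) \<le> 1" using assms by (simp add: powr_minus inverse_le_1_iff ge_one_powr_ge_zero)
  have tp: "0 \<le> t powr e" by simp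
  show "x powr e \<le> t powr e * K powr \<bar>e\<bar>"
  proof (cases "e \<ge> 0")
    case True
    have "x powr e \<le> t powr e" using assms x0 True by (intro powr_mono2) auto
    also have "\<dots> \<le> t powr e * K powr \<bar>e\<bar>" using K1 tp by (simp add: mult_le_cancel_left1)
    finally show ?thesis .
  next
    case False
    have "x powr e \<le> (t / K) powr e" using assms False by (intro powr_mono2') auto
    also have "\<dots> = t powr e * K powr \<bar>e\<bar>" using tK False by simp
    finally show ?thesis .
  qed
  show "t powr e * K powr (- \<bar>e\<bar>) \<le> x powr e"
  proof (cases "e \<ge> 0")
    case True
    have "t powr e * K powr (- \<bar>e\<bar>) = (t / K) powr e" using tK True by simp
    also have "\<dots> \<le> x powr e" using assms True by (intro powr_mono2) auto
    finally show ?thesis .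
  next
    case False
    have "t powr e * K powr (- \<bar>e\<bar>) \<le> t powr e" using K2 tp by (simp add: mult_left_le)
    also have "\<dots> \<le> x powr e" using assms x0 False by (intro powr_mono2') auto
    finally show ?thesis .
  qed
qed

context wt begin

definition mu where "mu x = w x * W x powr (\<alpha> - 1)"
definition Wc where "Wc x = W (max 0 (min 1 x))"
definition gam where "gam = \<bar>\<alpha> - 1\<bar>"

lemma Wc_cont: "continuous_on UNIV Wc"
proof -
  have "continuous_on UNIV (\<lambda>x::real. max 0 (min 1 x))" by (intro continuous_intros)
  moreover have "(\<lambda>x::real. max 0 (min 1 x)) ` UNIV \<subseteq> {0..1}" by auto
  ultimately show ?thesis unfolding Wc_def by (rule continuous_on_compose2[OF W_cont])
qed

lemma Wc_meas[measurable]: "Wc \<in> borel_measurable lborel"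
  using borel_measurable_continuous_onI[OF Wc_cont] by simp

lemma wm[measurable]: "(\<lambda>x. indicator {0..<1} x *\<^sub>R w x) \<in> borel_measurable lborel"
  using w_int unfolding set_integrable_def by auto

lemma set_int_bdd_w:
  assumes "0 \<le> a" "b \<le> 1" and hm[measurable]: "h \<in> borel_measurable lborel"
    and hb: "\<And>x. x \<in> {a..<b} \<Longrightarrow> \<bar>h x\<bar> \<le> B"
  shows "set_integrable lborel {a..<b} (\<lambda>x. h x * w x)"
proof (rule set_integrable_bound[of lborel "{a..<b}" "\<lambda>x. B * w x"])
  show "set_integrable lborel {a..<b} (\<lambda>x. B * w x)"
    using w_int_sub[OF assms(1,2)] by auto
  have eq: "(\<lambda>x. indicator {a..<b} x *\<^sub>R (h x * w x)) = (\<lambda>x. indicator {a..<b} x * h x * (indicator {0..<1} x *\<^sub>R w x))"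
    using assms(1,2) by (auto simp: indicator_def fun_eq_iff)
  show "set_borel_measurable lborel {a..<b} (\<lambda>x. h x * w x)"
    unfolding set_borel_measurable_def eq by measurable
  show "AE x in lborel. x \<in> {a..<b} \<longrightarrow> norm (h x * w x) \<le> norm (B * w x)"
  proof (intro AE_I2 impI)
    fix x assume x: "x \<in> {a..<b}"
    then have "0 \<le> w x" using assms(1,2) by (intro w_nonneg) auto
    moreover have "\<bar>h x\<bar> \<le> \<bar>B\<bar>" using hb[OF x] by simp
    ultimately show "norm (h x * w x) \<le> norm (B * w x)"
      by (simp add: abs_mult mult_right_mono)
  qed
qed

definition piece where "piece k y = (LBINT x:{r k..<r (Suc k)}. x ^ y * mu x)"

lemma piece_W: "x \<in> {r k..<r (Suc k)} \<Longrightarrow> t k / K < W x \<and> W x \<le> t k"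
  using W_before_r[of x "Suc k"] W_after_r[of k x] r_range[of k] r_range[of "Suc k"] t_Suc[of k] by auto

lemma piece_int: "set_integrable lborel {r k..<r (Suc k)} (\<lambda>x. x ^ y * mu x)"
proof -
  have "set_integrable lborel {r k..<r (Suc k)} (\<lambda>x. (x ^ y * Wc x powr (\<alpha> - 1)) * w x)"
  proof (rule set_int_bdd_w)
    show "0 \<le> r k" "r (Suc k) \<le> 1" using r_range[of k] r_range[of "Suc k"] by auto
    show "(\<lambda>x. x ^ y * Wc x powr (\<alpha> - 1)) \<in> borel_measurable lborel" by measurable
    fix x assume x: "x \<in> {r k..<r (Suc k)}"
    have x01: "0 \<le> x" "x \<le> 1" using x r_range[of k] r_range[of "Suc k"] by auto
    have Wcx: "Wc x = W x" using x01 by (simp add: Wc_def)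
    have b: "t k / K \<le> W x" "W x \<le> t k" using piece_W[OF x] by auto
    have "\<bar>x ^ y * Wc x powr (\<alpha> - 1)\<bar> = x ^ y * W x powr (\<alpha> - 1)" using x01 Wcx by simp
    also have "\<dots> \<le> 1 * (t k powr (\<alpha> - 1) * K powr \<bar>\<alpha> - 1\<bar>)"
      using x01 powr_band(1)[OF t_pos K1 b, of "\<alpha> - 1"] by (intro mult_mono) (auto simp: power_le_one)
    finally show "\<bar>x ^ y * Wc x powr (\<alpha> - 1)\<bar> \<le> t k powr (\<alpha> - 1) * K powr \<bar>\<alpha> - 1\<bar>" by simp
  qed
  then show ?thesis
  proof (rule set_integrable_cong_on)
    fix x assume x: "x \<in> {r k..<r (Suc k)}"
    have x01: "0 \<le> x" "x \<le> 1" using x r_range[of k] r_range[of "Suc k"] by auto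
    then show "x ^ y * Wc x powr (\<alpha> - 1) * w x = x ^ y * mu x" by (simp add: Wc_def mu_def)
  qed
qed

lemma int_w_piece: "(LBINT x:{r k..<r (Suc k)}. w x) = t k * (1 - 1 / K)"
proof -
  have "W (r k) = (LBINT x:{r k..<r (Suc k)}. w x) + W (r (Suc k))"
    using r_range[of k] r_range[of "Suc k"] r_less[of k] by (intro W_split) auto
  then show ?thesis using W_r[of k] W_r[of "Suc k"] t_Suc[of k] by (simp add: algebra_simps)
qed

lemma tpow: "t k powr (\<alpha> - 1) * (t k * (1 - 1 / K)) = (1 - 1 / K) * t k powr \<alpha>"
proof -
  have "t k powr (\<alpha> - 1) * t k = t k powr \<alpha>"
    using t_pos[of k] by (simp add: powr_diff)
  then show ?thesis by (simp add: algebra_simps)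
qed

lemma piece_upper: "piece k y \<le> r (Suc k) ^ y * (K powr gam * (1 - 1 / K)) * t k powr \<alpha>"
proof -
  have "piece k y \<le> (LBINT x:{r k..<r (Suc k)}. (r (Suc k) ^ y * (t k powr (\<alpha> - 1) * K powr gam)) * w x)"
    unfolding piece_def
  proof (rule set_integral_mono[OF piece_int])
    show "set_integrable lborel {r k..<r (Suc k)} (\<lambda>x. r (Suc k) ^ y * (t k powr (\<alpha> - 1) * K powr gam) * w x)"
      using w_int_sub[of "r k" "r (Suc k)"] r_range[of k] r_range[of "Suc k"] by auto
    fix x assume x: "x \<in> {r k..<r (Suc k)}"
    have x01: "0 \<le> x" "x \<le> 1" using x r_range[of k] r_range[of "Suc k"] by auto
    have b: "t k / K \<le> W x" "W x \<le> t k" using piece_W[OF x] by auto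
    have wx: "0 \<le> w x" using x01 x r_range[of "Suc k"] by (intro w_nonneg) auto
    have "x ^ y \<le> r (Suc k) ^ y" using x x01 by (intro power_mono) auto
    moreover have "W x powr (\<alpha> - 1) \<le> t k powr (\<alpha> - 1) * K powr gam"
      using powr_band(1)[OF t_pos K1 b] by (simp add: gam_def)
    ultimately have "x ^ y * W x powr (\<alpha> - 1) \<le> r (Suc k) ^ y * (t k powr (\<alpha> - 1) * K powr gam)"
      using x01 r_range[of "Suc k"] by (intro mult_mono) auto
    then show "x ^ y * mu x \<le> r (Suc k) ^ y * (t k powr (\<alpha> - 1) * K powr gam) * w x"
      using wx unfolding mu_def by (simp add: mult_right_mono mult_ac) (metis mult.assoc mult.commute mult_right_mono)
  qed
  also have "\<dots> = r (Suc k) ^ y * (t k powr (\<alpha> - 1) * K powr gam) * (t k * (1 - 1 / K))"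
    using int_w_piece[of k] by simp
  also have "\<dots> = r (Suc k) ^ y * K powr gam * (t k powr (\<alpha> - 1) * (t k * (1 - 1 / K)))"
    by (simp only: mult_ac)
  also have "\<dots> = r (Suc k) ^ y * (K powr gam * (1 - 1 / K)) * t k powr \<alpha>"
    by (subst tpow) (simp only: mult_ac)
  finally show ?thesis .
qed

lemma piece_lower: "r k ^ y * (K powr (- gam) * (1 - 1 / K)) * t k powr \<alpha> \<le> piece k y"
proof -
  have "r k ^ y * (K powr (- gam) * (1 - 1 / K)) * t k powr \<alpha>
      = r k ^ y * K powr (- gam) * (t k powr (\<alpha> - 1) * (t k * (1 - 1 / K)))"
    by (subst tpow) (simp only: mult_ac)
  also have "\<dots> = r k ^ y * (t k powr (\<alpha> - 1) * K powr (- gam)) * (t k * (1 - 1 / K))"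
    by (simp only: mult_ac)
  also have "\<dots> = (LBINT x:{r k..<r (Suc k)}. (r k ^ y * (t k powr (\<alpha> - 1) * K powr (- gam))) * w x)"
    using int_w_piece[of k] by simp
  also have "\<dots> \<le> piece k y"
    unfolding piece_def
  proof (rule set_integral_mono[OF _ piece_int])
    show "set_integrable lborel {r k..<r (Suc k)} (\<lambda>x. r k ^ y * (t k powr (\<alpha> - 1) * K powr (- gam)) * w x)"
      using w_int_sub[of "r k" "r (Suc k)"] r_range[of k] r_range[of "Suc k"] by auto
    fix x assume x: "x \<in> {r k..<r (Suc k)}"
    have x01: "0 \<le> x" "x \<le> 1" using x r_range[of k] r_range[of "Suc k"] by auto
    have b: "t k / K \<le> W x" "W x \<le> t k" using piece_W[OF x] by auto
    have wx: "0 \<le> w x" using x01 x r_range[of "Suc k"] by (intro w_nonneg) auto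
    have "r k ^ y \<le> x ^ y" using x r_range[of k] by (intro power_mono) auto
    moreover have "t k powr (\<alpha> - 1) * K powr (- gam) \<le> W x powr (\<alpha> - 1)"
      using powr_band(2)[OF t_pos K1 b] by (simp add: gam_def)
    ultimately have "r k ^ y * (t k powr (\<alpha> - 1) * K powr (- gam)) \<le> x ^ y * W x powr (\<alpha> - 1)"
      using r_range[of k] x01 by (intro mult_mono) auto
    then show "r k ^ y * (t k powr (\<alpha> - 1) * K powr (- gam)) * w x \<le> x ^ y * mu x"
      using wx unfolding mu_def by (metis mult.assoc mult.commute mult_right_mono)
  qed
  finally show ?thesis .
qed

end

lemma exp_neg_bound:
  fixes z :: real assumes "0 < z" "1 \<le> p"
  shows "exp (- z) \<le> (real p / z) ^ p"
proof -
  have "(1 + z / real p) ^ p \<le> exp z"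
    using assms by (intro exp_ge_one_plus_x_over_n_power_n) auto
  moreover have "(z / real p) ^ p \<le> (1 + z / real p) ^ p"
    using assms by (intro power_mono) auto
  ultimately have le: "(z / real p) ^ p \<le> exp z" by linarith
  have pos: "0 < (z / real p) ^ p" using assms by simp
  have "exp (- z) = 1 / exp z" by (simp add: exp_minus field_simps)
  also have "\<dots> \<le> 1 / (z / real p) ^ p" using le pos by (intro divide_left_mono) auto
  also have "\<dots> = (real p / z) ^ p" by (simp add: power_divide)
  finally show ?thesis .
qed

lemma pow_exp_bound:
  fixes x :: real assumes "0 \<le> x"
  shows "x ^ m \<le> exp (- ((1 - x) * real m))"
proof -
  have "x \<le> exp (- (1 - x))" using exp_ge_add_one_self[of "- (1 - x)"] by simp
  then have "x ^ m \<le> exp (- (1 - x)) ^ m" using assms by (intro power_mono) auto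
  also have "\<dots> = exp (real m * (- (1 - x)))" by (simp add: exp_of_nat_mult)
  also have "real m * (- (1 - x)) = - ((1 - x) * real m)" by (simp add: algebra_simps)
  finally show ?thesis .
qed

context wt begin

definition Q where "Q = K powr (- \<alpha>)"
definition Aup where "Aup = K powr gam * (1 - 1 / K) * W 0 powr \<alpha>"
definition Alo where "Alo = K powr (- gam) * (1 - 1 / K) * W 0 powr \<alpha>"

lemma Q_pos: "0 < Q" and Q_less: "Q < 1"
proof -
  show "0 < Q" using K1 by (simp add: Q_def)
  have "K powr (- \<alpha>) < K powr 0" using K1 apos by (intro powr_less_mono) auto
  then show "Q < 1" using K1 by (simp add: Q_def)
qed

lemma Aup_pos: "0 < Aup" using K1 W0_pos by (simp add: Aup_def)
lemma Alo_pos: "0 < Alo" using K1 W0_pos by (simp add: Alo_def)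

lemma Qpow: "Q ^ k = K powr (- \<alpha> * real k)"
proof -
  have "K powr (- \<alpha> * real k) = (K powr (- \<alpha>)) powr (real k)" by (simp add: powr_powr)
  also have "\<dots> = (K powr (- \<alpha>)) ^ k" using K1 by (intro powr_realpow) simp
  finally show ?thesis by (simp add: Q_def)
qed

lemma t_powr: "t k powr \<alpha> = W 0 powr \<alpha> * Q ^ k"
proof -
  have "t k powr \<alpha> = W 0 powr \<alpha> * (K powr (- real k)) powr \<alpha>"
    unfolding t_def using W0_pos K1 by (simp add: powr_mult)
  also have "(K powr (- real k)) powr \<alpha> = K powr (- \<alpha> * real k)" by (simp add: powr_powr mult_ac)
  finally show ?thesis by (simp add: Qpow)
qed

lemma piece_up: "piece k y \<le> r (Suc k) ^ y * Aup * Q ^ k"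
  using piece_upper[of k y] by (simp add: t_powr Aup_def mult_ac)

lemma piece_lo: "r k ^ y * Alo * Q ^ k \<le> piece k y"
  using piece_lower[of k y] by (simp add: t_powr Alo_def mult_ac)

lemma piece_nonneg: "0 \<le> piece k y"
proof -
  have "0 \<le> r k ^ y * Alo * Q ^ k" using r_range[of k] Alo_pos Q_pos by simp
  then show ?thesis using piece_lo[of k y] by linarith
qed

lemma piece_le_geo: "piece k y \<le> Aup * Q ^ k"
proof -
  have "r (Suc k) ^ y \<le> 1" using r_range[of "Suc k"] by (intro power_le_one) auto
  then have "r (Suc k) ^ y * (Aup * Q ^ k) \<le> 1 * (Aup * Q ^ k)"
    using Aup_pos Q_pos by (intro mult_right_mono) auto
  then show ?thesis using piece_up[of k y] by (simp add: mult_ac)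
qed

lemma summable_piece: "summable (\<lambda>k. piece k y)"
proof (rule summable_comparison_test'[of "\<lambda>k. Aup * Q ^ k" 0])
  show "summable (\<lambda>k. Aup * Q ^ k)" using Q_pos Q_less by (intro summable_mult) simp
  fix k show "norm (piece k y) \<le> Aup * Q ^ k" using piece_nonneg[of k y] piece_le_geo[of k y] by simp
qed

lemma mu_nonneg: "x \<in> {0..<1} \<Longrightarrow> 0 \<le> mu x"
  using w_nonneg by (simp add: mu_def)

lemma partial:
  "set_integrable lborel {0..<r n} (\<lambda>x. x ^ y * mu x) \<and> (LBINT x:{0..<r n}. x ^ y * mu x) = (\<Sum>k<n. piece k y)"
proof (induction n)
  case 0
  then show ?case using r0 by (simp add: set_integrable_def set_lebesgue_integral_def)
next
  case (Suc n)
  have un: "{0..<r (Suc n)} = {0..<r n} \<union> {r n..<r (Suc n)}" using r_less[of n] r_range[of n] by auto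
  have dj: "{0..<r n} \<inter> {r n..<r (Suc n)} = {}" by auto
  have i1: "set_integrable lborel {0..<r n} (\<lambda>x. x ^ y * mu x)" using Suc by simp
  have i2: "set_integrable lborel {r n..<r (Suc n)} (\<lambda>x. x ^ y * mu x)" by (rule piece_int)
  have "set_integrable lborel {0..<r (Suc n)} (\<lambda>x. x ^ y * mu x)"
    unfolding un by (rule set_integrable_Un[OF i1 i2]) auto
  moreover have "(LBINT x:{0..<r (Suc n)}. x ^ y * mu x) = (\<Sum>k<Suc n. piece k y)"
    unfolding un using set_integral_Un[OF dj i1 i2] Suc by (simp add: piece_def)
  ultimately show ?case by simp
qed

lemma mom_decomp:
  "set_integrable lborel {0..<1} (\<lambda>x. x ^ y * mu x) \<and> moment mu y = (\<Sum>k. piece k y)"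
proof -
  define f where "f i x = indicator {0..<r i} x * (x ^ y * mu x)" for i x
  define u where "u x = indicator {0..<1} x * (x ^ y * mu x)" for x
  have fi: "integrable lborel (f i)" for i
    using partial[of i] unfolding set_integrable_def f_def by simp
  have fint: "integral\<^sup>L lborel (f i) = (\<Sum>k<i. piece k y)" for i
    using partial[of i] unfolding set_lebesgue_integral_def f_def by simp
  have ueq: "u = (\<lambda>x. x ^ y * Wc x powr (\<alpha> - 1) * (indicator {0..<1} x *\<^sub>R w x))"
    by (auto simp: u_def fun_eq_iff indicator_def mu_def Wc_def)
  have um: "u \<in> borel_measurable lborel" unfolding ueq by measurable
  have gnn: "0 \<le> x ^ y * mu x" if "x \<in> {0..<1}" for x using that mu_nonneg by simp
  have mono: "mono (\<lambda>n. f n x)" for x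
  proof (rule monoI)
    fix n m :: nat assume "n \<le> m"
    then have "r n \<le> r m" by (rule r_mono)
    then show "f n x \<le> f m x" unfolding f_def using gnn[of x] r_range[of m]
      by (auto simp: indicator_def)
  qed
  have pos: "0 \<le> f i x" for i x unfolding f_def using gnn[of x] r_range[of i]
    by (auto simp: indicator_def)
  have lim: "(\<lambda>i. f i x) \<longlonglongrightarrow> u x" for x
  proof (cases "0 \<le> x \<and> x < 1")
    case True
    then obtain n0 where n0: "x < r n0" using r_exceeds by blast
    have "eventually (\<lambda>i. f i x = u x) sequentially"
    proof (rule eventually_sequentiallyI[of n0])
      fix i assume "n0 \<le> i"
      then have "x < r i" using n0 r_mono[of n0 i] by simp
      then show "f i x = u x" using True by (simp add: f_def u_def indicator_def)
    qed
    then show ?thesis by (rule tendsto_eventually)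
  next
    case False
    have "f i x = u x" for i using False r_range[of i] by (auto simp: f_def u_def indicator_def)
    then show ?thesis by simp
  qed
  have ilim: "(\<lambda>i. integral\<^sup>L lborel (f i)) \<longlonglongrightarrow> (\<Sum>k. piece k y)"
    unfolding fint by (rule summable_LIMSEQ[OF summable_piece])
  note mc = integral_monotone_convergence_nonneg[OF fi AE_I2[OF mono] AE_I2[OF pos] AE_I2[OF lim] ilim um]
  have "set_integrable lborel {0..<1} (\<lambda>x. x ^ y * mu x)"
    using mc(1) unfolding set_integrable_def u_def by simp
  moreover have "moment mu y = (\<Sum>k. piece k y)"
    using mc(2) unfolding moment_def set_lebesgue_integral_def u_def by simp
  ultimately show ?thesis by simp
qed

lemma mom_int: "set_integrable lborel {0..<1} (\<lambda>x. x ^ y * mu x)"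
  using mom_decomp by simp

lemma mom_eq: "moment mu y = (\<Sum>k. piece k y)"
  using mom_decomp by simp

lemma mom_lower:
  assumes "2 * real y \<le> real (M m)"
  shows "Alo / 2 * Q ^ m \<le> moment mu y"
proof -
  have M1: "1 \<le> M m" by (rule M_facts(1))
  have rm: "1 - 1 / real (M m) \<le> r m" using M_facts(2)[of m] by simp
  have h0: "0 \<le> 1 - 1 / real (M m)" using M1 by simp
  have "1 + real y * (- (1 / real (M m))) \<le> (1 + (- (1 / real (M m)))) ^ y"
    using M1 by (intro Bernoulli_inequality) simp
  moreover have "1 / 2 \<le> 1 + real y * (- (1 / real (M m)))"
    using assms M1 by (simp add: field_simps)
  moreover have "(1 - 1 / real (M m)) ^ y \<le> r m ^ y" using rm h0 by (intro power_mono) auto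
  ultimately have half: "1 / 2 \<le> r m ^ y" by simp
  have "Alo / 2 * Q ^ m = (1 / 2) * (Alo * Q ^ m)" by simp
  also have "\<dots> \<le> r m ^ y * (Alo * Q ^ m)" using half Alo_pos Q_pos by (intro mult_right_mono) auto
  also have "\<dots> \<le> piece m y" using piece_lo[of m y] by (simp add: mult_ac)
  also have "\<dots> \<le> (\<Sum>k. piece k y)"
    using sum_le_suminf[OF summable_piece, of "{m}" y] piece_nonneg by simp
  finally show ?thesis by (simp add: mom_eq)
qed

definition pp where "pp = (SOME p. 1 \<le> p \<and> 2 / Q \<le> Cl ^ p)"

lemma pp: "1 \<le> pp" "2 / Q \<le> Cl ^ pp"
proof -
  obtain p where p: "2 / Q < Cl ^ p" using real_arch_pow[OF Cl(1)] by blast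
  have "Cl ^ p \<le> Cl ^ (max 1 p)" using Cl(1) by (intro power_increasing) auto
  then have "\<exists>p. 1 \<le> p \<and> 2 / Q \<le> Cl ^ p" using p by (intro exI[of _ "max 1 p"]) auto
  then have "1 \<le> pp \<and> 2 / Q \<le> Cl ^ pp" unfolding pp_def by (rule someI_ex)
  then show "1 \<le> pp" "2 / Q \<le> Cl ^ pp" by auto
qed

definition Cup where "Cup = 2 * Aup * (2 * real pp) ^ pp / Q + Aup / (1 - Q)"

lemma head_term:
  assumes "k < n" "real (M n) \<le> real y"
  shows "r (Suc k) ^ y * Aup * Q ^ k \<le> Aup * (2 * real pp) ^ pp * Q ^ (n - 1) * (1 / 2) ^ (n - Suc k)"
proof -
  define j where "j = n - Suc k"
  have nj: "n = Suc k + j" using assms(1) by (simp add: j_def)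
  define z where "z = real (M n) / (2 * real (M (Suc k)))"
  have Mk: "1 \<le> M (Suc k)" "1 \<le> M n" using M_facts(1) by auto
  have z0: "0 < z" using Mk by (simp add: z_def)
  have r01: "0 \<le> r (Suc k)" "r (Suc k) \<le> 1" using r_range[of "Suc k"] by auto
  have "r (Suc k) ^ y \<le> r (Suc k) ^ (M n)"
    using r01 assms(2) by (intro power_decreasing) auto
  also have "\<dots> \<le> exp (- ((1 - r (Suc k)) * real (M n)))" by (rule pow_exp_bound[OF r01(1)])
  also have "\<dots> \<le> exp (- z)"
  proof -
    have "1 / (2 * real (M (Suc k))) * real (M n) \<le> (1 - r (Suc k)) * real (M n)"
      using M_facts(3)[of "Suc k"] by (intro mult_right_mono) auto
    then have "z \<le> (1 - r (Suc k)) * real (M n)" by (simp add: z_def)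
    then show ?thesis by simp
  qed
  also have "\<dots> \<le> (real pp / z) ^ pp" using z0 pp(1) by (rule exp_neg_bound)
  also have "real pp / z = 2 * real pp * (real (M (Suc k)) / real (M n))"
    using Mk by (simp add: z_def field_simps)
  also have "(2 * real pp * (real (M (Suc k)) / real (M n))) ^ pp \<le> (2 * real pp * (1 / Cl ^ j)) ^ pp"
  proof -
    have lac: "Cl ^ j * real (M (Suc k)) \<le> real (M n)" using M_lac_pow[where n="Suc k" and j=j] nj by simp
    have "real (M (Suc k)) / real (M n) \<le> 1 / Cl ^ j"
      using lac Mk Cl(1) by (simp add: field_simps)
    then show ?thesis using Mk by (intro power_mono mult_left_mono) auto
  qed
  also have "\<dots> = (2 * real pp) ^ pp * (1 / Cl ^ pp) ^ j"
    by (simp add: power_mult_distrib power_divide power_mult[symmetric] mult.commute)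
  also have "\<dots> \<le> (2 * real pp) ^ pp * (Q / 2) ^ j"
  proof -
    have "1 / Cl ^ pp \<le> Q / 2" using pp(2) Q_pos Cl(1) by (simp add: field_simps)
    moreover have "0 \<le> 1 / Cl ^ pp" using Cl(1) by simp
    ultimately show ?thesis by (intro mult_left_mono power_mono) auto
  qed
  finally have rb: "r (Suc k) ^ y \<le> (2 * real pp) ^ pp * (Q / 2) ^ j" .
  have "r (Suc k) ^ y * Aup * Q ^ k \<le> (2 * real pp) ^ pp * (Q / 2) ^ j * Aup * Q ^ k"
    using rb Aup_pos Q_pos by (intro mult_right_mono) auto
  also have "\<dots> = Aup * (2 * real pp) ^ pp * Q ^ (k + j) * (1 / 2) ^ j"
    by (simp add: power_add power_divide field_simps)
  also have "k + j = n - 1" using nj by simp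
  finally show ?thesis by (simp add: j_def)
qed

lemma mom_upper:
  assumes "real (M n) \<le> real y"
  shows "moment mu y \<le> Cup * Q ^ n"
proof -
  define b where "b k = r (Suc k) ^ y * Aup * Q ^ k" for k
  have bnn: "0 \<le> b k" for k using r_range[of "Suc k"] Aup_pos Q_pos by (simp add: b_def)
  have bgeo: "b k \<le> Aup * Q ^ k" for k
  proof -
    have "r (Suc k) ^ y \<le> 1" using r_range[of "Suc k"] by (intro power_le_one) auto
    then show ?thesis unfolding b_def using Aup_pos Q_pos
      by (metis mult.assoc mult_left_le_one_le mult_nonneg_nonneg less_imp_le zero_le_power r_range(1) zero_le_power)
  qed
  have sgeo: "summable (\<lambda>k. Aup * Q ^ k)" using Q_pos Q_less by (intro summable_mult) simp
  have sb: "summable b"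
    by (rule summable_comparison_test'[OF sgeo, of 0]) (use bnn bgeo in auto)
  have "moment mu y \<le> suminf b"
    unfolding mom_eq by (rule suminf_le[OF _ summable_piece sb]) (simp add: b_def piece_up)
  also have "suminf b = (\<Sum>k. b (k + n)) + (\<Sum>k<n. b k)" by (rule suminf_split_initial_segment[OF sb])
  also have "(\<Sum>k. b (k + n)) \<le> Aup / (1 - Q) * Q ^ n"
  proof -
    have sbn: "summable (\<lambda>k. b (k + n))" using sb by (simp add: summable_iff_shift)
    have s2: "summable (\<lambda>k. (Aup * Q ^ n) * Q ^ k)" using Q_pos Q_less by (intro summable_mult) simp
    have "(\<Sum>k. b (k + n)) \<le> (\<Sum>k. (Aup * Q ^ n) * Q ^ k)"
    proof (rule suminf_le[OF _ sbn s2])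
      fix k show "b (k + n) \<le> Aup * Q ^ n * Q ^ k"
        using bgeo[of "k + n"] by (simp add: power_add mult_ac)
    qed
    also have "\<dots> = (Aup * Q ^ n) * (1 / (1 - Q))"
      using Q_pos Q_less by (simp add: suminf_mult suminf_geometric)
    finally show ?thesis by simp
  qed
  also have "(\<Sum>k<n. b k) \<le> 2 * Aup * (2 * real pp) ^ pp / Q * Q ^ n"
  proof (cases n)
    case 0 then show ?thesis using Aup_pos Q_pos by simp
  next
    case (Suc n')
    have "(\<Sum>k<n. b k) \<le> (\<Sum>k<n. Aup * (2 * real pp) ^ pp * Q ^ (n - 1) * (1 / 2) ^ (n - Suc k))"
      by (intro sum_mono) (use head_term assms in \<open>auto simp: b_def\<close>)
    also have "\<dots> = Aup * (2 * real pp) ^ pp * Q ^ (n - 1) * (\<Sum>k<n. (1 / 2) ^ (n - Suc k))"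
      by (simp add: sum_distrib_left)
    also have "\<dots> \<le> Aup * (2 * real pp) ^ pp * Q ^ (n - 1) * 2"
    proof (rule mult_left_mono)
      have "(\<Sum>k<n. (1 / 2 :: real) ^ (n - Suc k)) = (\<Sum>k<n. (1 / 2) ^ k)"
        by (rule sum.nat_diff_reindex)
      also have "\<dots> \<le> (\<Sum>k. (1 / 2) ^ k)"
        by (rule sum_le_suminf) auto
      also have "\<dots> = 2" by (simp add: suminf_geometric)
      finally show "(\<Sum>k<n. (1 / 2 :: real) ^ (n - Suc k)) \<le> 2" .
      show "0 \<le> Aup * (2 * real pp) ^ pp * Q ^ (n - 1)" using Aup_pos Q_pos by simp
    qed
    also have "\<dots> = 2 * Aup * (2 * real pp) ^ pp / Q * Q ^ n"
      using Suc Q_pos by (simp add: field_simps)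
    finally show ?thesis .
  qed
  finally show ?thesis by (simp add: Cup_def algebra_simps)
qed

lemma Cup_pos: "0 < Cup"
proof -
  have "0 \<le> 2 * Aup * (2 * real pp) ^ pp / Q" using Aup_pos Q_pos by simp
  moreover have "0 < Aup / (1 - Q)" using Aup_pos Q_less by simp
  ultimately show ?thesis unfolding Cup_def by linarith
qed

end

definition E2 :: "(nat \<Rightarrow> real) \<Rightarrow> nat \<Rightarrow> real" where
  "E2 l s = l s - 2 * l (Suc s) + l (Suc (Suc s))"

lemma taylor_rep:
  "j \<le> Suc B \<Longrightarrow> (\<Sum>s\<le>B. real (s + 1 - j) * E2 l s)
     = l j - real (B + 2 - j) * l (Suc B) + real (B + 1 - j) * l (Suc (Suc B))"
proof (induction B arbitrary: j)
  case 0
  then have "j = 0 \<or> j = 1" by auto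
  then show ?case by (auto simp: E2_def)
next
  case (Suc B)
  show ?case
  proof (cases "j \<le> Suc B")
    case True
    have "(\<Sum>s\<le>Suc B. real (s + 1 - j) * E2 l s) = (\<Sum>s\<le>B. real (s + 1 - j) * E2 l s) + real (Suc B + 1 - j) * E2 l (Suc B)"
      by simp
    also have "\<dots> = l j - real (B + 2 - j) * l (Suc B) + real (B + 1 - j) * l (Suc (Suc B)) + real (Suc B + 1 - j) * E2 l (Suc B)"
      using Suc.IH[OF True] by simp
    also have "\<dots> = l j - real (Suc B + 2 - j) * l (Suc (Suc B)) + real (Suc B + 1 - j) * l (Suc (Suc (Suc B)))"
      using True by (simp add: E2_def of_nat_diff algebra_simps)
    finally show ?thesis .
  next
    case False
    then have j: "j = Suc (Suc B)" using Suc.prems by simp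
    have "(\<Sum>s\<le>Suc B. real (s + 1 - j) * E2 l s) = 0"
      by (intro sum.neutral) (auto simp: j)
    then show ?thesis by (simp add: j)
  qed
qed

lemma taylor_rep0:
  assumes "l (Suc B) = 0" "l (Suc (Suc B)) = 0" "j \<le> Suc B"
  shows "l j = (\<Sum>s\<le>B. real (s + 1 - j) * E2 l s)"
  using taylor_rep[OF assms(3), of l] assms(1,2) by simp

definition ramp :: "nat \<Rightarrow> nat \<Rightarrow> (nat \<Rightarrow> real) \<Rightarrow> nat \<Rightarrow> real" where
  "ramp a b u j = (if j \<le> a then u a + (real a - real j) * (u a - u (Suc a))
     else if j \<le> b then u j else if j \<le> 2 * b then u b * (2 * real b - real j) / real b else 0)"

context
  fixes a b :: nat and u :: "nat \<Rightarrow> real"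
  assumes ab: "a < b"
begin

lemma ramp_lin: "j \<le> Suc a \<Longrightarrow> ramp a b u j = u a + (real a - real j) * (u a - u (Suc a))"
proof (cases "j \<le> a")
  case False
  assume "j \<le> Suc a"
  with False have "j = Suc a" by simp
  then show ?thesis using ab by (simp add: ramp_def)
qed (simp add: ramp_def)

lemma ramp_mid: "a \<le> j \<Longrightarrow> j \<le> b \<Longrightarrow> ramp a b u j = u j"
  by (cases "j \<le> a") (auto simp: ramp_def)

lemma ramp_right: "b \<le> j \<Longrightarrow> j \<le> 2 * b \<Longrightarrow> ramp a b u j = u b * (2 * real b - real j) / real b"
  using ab by (cases "j = b") (auto simp: ramp_def)

lemma ramp_zero: "2 * b \<le> j \<Longrightarrow> ramp a b u j = 0"
  using ab by (auto simp: ramp_def)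

lemma E_low: "s < a \<Longrightarrow> E2 (ramp a b u) s = 0"
  by (simp add: E2_def ramp_lin algebra_simps)

lemma E_mid: "a \<le> s \<Longrightarrow> s + 2 \<le> b \<Longrightarrow> E2 (ramp a b u) s = E2 u s"
  by (simp add: E2_def ramp_mid)

lemma E_junc: "E2 (ramp a b u) (b - 1) = u (b - 1) - 2 * u b + u b * (real b - 1) / real b"
proof -
  have b1: "1 \<le> b" using ab by simp
  have "ramp a b u (b - 1) = u (b - 1)" using ab by (intro ramp_mid) auto
  moreover have "ramp a b u (Suc (b - 1)) = u b" using ab b1 by (simp add: ramp_mid)
  moreover have "ramp a b u (Suc (Suc (b - 1))) = u b * (real b - 1) / real b"
    using b1 by (subst ramp_right) (auto simp: of_nat_diff)
  ultimately show ?thesis by (simp add: E2_def)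
qed

lemma E_right: "b \<le> s \<Longrightarrow> s + 2 \<le> 2 * b \<Longrightarrow> E2 (ramp a b u) s = 0"
  using ab by (simp add: E2_def ramp_right field_simps)

lemma E_kink: "E2 (ramp a b u) (2 * b - 1) = u b / real b"
proof -
  have b1: "1 \<le> b" using ab by simp
  have "ramp a b u (2 * b - 1) = u b * (2 * real b - real (2 * b - 1)) / real b"
    using b1 by (intro ramp_right) auto
  also have "2 * real b - real (2 * b - 1) = 1" using b1 by (simp add: of_nat_diff)
  finally have "ramp a b u (2 * b - 1) = u b / real b" by simp
  moreover have "ramp a b u (Suc (2 * b - 1)) = 0" using b1 by (intro ramp_zero) auto
  moreover have "ramp a b u (Suc (Suc (2 * b - 1))) = 0" using b1 by (intro ramp_zero) auto
  ultimately show ?thesis by (simp add: E2_def)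
qed

lemma E_high: "2 * b \<le> s \<Longrightarrow> E2 (ramp a b u) s = 0"
  by (simp add: E2_def ramp_zero)

lemma ramp_rep:
  "ramp a b u j = (\<Sum>s\<le>2 * b. real (s + 1 - j) * E2 (ramp a b u) s)" if "j \<le> Suc (2 * b)"
  by (rule taylor_rep0) (use that in \<open>auto intro: ramp_zero\<close>)

lemma ramp_sum:
  "(\<Sum>s\<le>2 * b. real (s + 1) * \<bar>E2 (ramp a b u) s\<bar>)
     \<le> (\<Sum>s\<in>{a..<b - 1}. real (s + 1) * \<bar>E2 u s\<bar>)
       + real b * \<bar>u (b - 1) - 2 * u b + u b * (real b - 1) / real b\<bar> + 2 * \<bar>u b\<bar>"
proof -
  have b1: "1 \<le> b" using ab by simp
  define g where "g s = (if s \<in> {a..<b - 1} then real (s + 1) * \<bar>E2 u s\<bar> else 0)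
     + (if s = b - 1 then real b * \<bar>u (b - 1) - 2 * u b + u b * (real b - 1) / real b\<bar> else 0)
     + (if s = 2 * b - 1 then 2 * \<bar>u b\<bar> else 0)" for s
  have pw: "real (s + 1) * \<bar>E2 (ramp a b u) s\<bar> \<le> g s" for s
  proof -
    have gnn: "0 \<le> g s" by (simp add: g_def)
    consider "s < a" | "a \<le> s \<and> s + 2 \<le> b" | "s = b - 1" | "b \<le> s \<and> s + 2 \<le> 2 * b" | "s = 2 * b - 1" | "2 * b \<le> s"
      using b1 by linarith
    then show ?thesis
    proof cases
      case 1 then show ?thesis using gnn by (simp add: E_low)
    next
      case 2
      then have "s \<in> {a..<b - 1}" "s \<noteq> 2 * b - 1" "s \<noteq> b - 1" by auto
      then show ?thesis using 2 by (simp add: g_def E_mid)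
    next
      case 3
      then have "s \<notin> {a..<b - 1}" "s \<noteq> 2 * b - 1" using b1 by auto
      moreover have "E2 (ramp a b u) s = u (b - 1) - 2 * u b + u b * (real b - 1) / real b"
        using 3 E_junc by simp
      moreover have "real (s + 1) = real b" using 3 b1 by simp
      ultimately show ?thesis unfolding g_def using 3 by simp
    next
      case 4 then show ?thesis using gnn by (simp add: E_right)
    next
      case 5
      then have "s \<notin> {a..<b - 1}" "s \<noteq> b - 1" using b1 by auto
      moreover have "real (s + 1) * \<bar>u b / real b\<bar> = 2 * \<bar>u b\<bar>"
        using 5 b1 by (simp add: of_nat_diff abs_divide field_simps)
      moreover have "E2 (ramp a b u) s = u b / real b" using 5 E_kink by simp
      ultimately show ?thesis unfolding g_def using 5 by simp
    next
      case 6 then show ?thesis using gnn by (simp add: E_high)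
    qed
  qed
  have "(\<Sum>s\<le>2 * b. real (s + 1) * \<bar>E2 (ramp a b u) s\<bar>) \<le> (\<Sum>s\<le>2 * b. g s)"
    by (intro sum_mono pw)
  also have "\<dots> = (\<Sum>s\<le>2 * b. (if s \<in> {a..<b - 1} then real (s + 1) * \<bar>E2 u s\<bar> else 0))
     + (\<Sum>s\<le>2 * b. (if s = b - 1 then real b * \<bar>u (b - 1) - 2 * u b + u b * (real b - 1) / real b\<bar> else 0))
     + (\<Sum>s\<le>2 * b. (if s = 2 * b - 1 then 2 * \<bar>u b\<bar> else 0))"
    unfolding g_def by (simp add: sum.distrib)
  also have "(\<Sum>s\<le>2 * b. (if s \<in> {a..<b - 1} then real (s + 1) * \<bar>E2 u s\<bar> else 0))
      = (\<Sum>s\<in>{a..<b - 1}. real (s + 1) * \<bar>E2 u s\<bar>)"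
  proof -
    have i: "{..2 * b} \<inter> {a..<b - 1} = {a..<b - 1}" by auto
    have "(\<Sum>s\<le>2 * b. (if s \<in> {a..<b - 1} then real (s + 1) * \<bar>E2 u s\<bar> else 0))
       = (\<Sum>s\<in>{..2 * b} \<inter> {a..<b - 1}. real (s + 1) * \<bar>E2 u s\<bar>)"
      by (rule sum.inter_restrict[symmetric]) simp
    then show ?thesis by (simp only: i)
  qed
  also have "(\<Sum>s\<le>2 * b. (if s = b - 1 then real b * \<bar>u (b - 1) - 2 * u b + u b * (real b - 1) / real b\<bar> else 0))
      = real b * \<bar>u (b - 1) - 2 * u b + u b * (real b - 1) / real b\<bar>"
    by (subst sum.delta) auto
  also have "(\<Sum>s\<le>2 * b. (if s = 2 * b - 1 then 2 * \<bar>u b\<bar> else 0)) = 2 * \<bar>u b\<bar>"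
    by (subst sum.delta) auto
  finally show ?thesis .
qed

end


lemma tele_eq:
  fixes d :: "nat \<Rightarrow> real"
  shows "(\<Sum>s\<in>{a..<a + 1 + L}. real (s + 1) * (d s - d (Suc s)))
    = real (a + 1) * d a - real (a + 1 + L) * d (a + 1 + L) + (\<Sum>s\<in>{a + 1..<a + 1 + L}. d s)"
proof (induction L)
  case 0 then show ?case by (simp add: algebra_simps)
next
  case (Suc L)
  have "{a..<a + 1 + Suc L} = insert (a + 1 + L) {a..<a + 1 + L}" by auto
  moreover have "{a + 1..<a + 1 + Suc L} = insert (a + 1 + L) {a + 1..<a + 1 + L}" by auto
  ultimately show ?case using Suc by (simp add: algebra_simps)
qed

context
  fixes a b :: nat and m :: "nat \<Rightarrow> real" and U :: real
  assumes ab: "a < b"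
    and hdec: "\<And>s. m (Suc s) \<le> m s"
    and hconv: "\<And>s. 0 \<le> E2 m s"
    and hpos: "\<And>s. 0 \<le> m s"
    and hU: "\<And>s. a \<le> s \<Longrightarrow> m s \<le> U"
    and hD: "\<And>s. a \<le> s \<Longrightarrow> real (s + 1) * (m s - m (Suc s)) \<le> 2 * U"
begin

lemma U_nonneg: "0 \<le> U" using hpos[of a] hU[of a] by simp

lemma tele_m: "(\<Sum>s\<in>{a..<c}. real (s + 1) * E2 m s) \<le> 3 * U"
proof (cases "a < c")
  case True
  then obtain L where c: "c = a + 1 + L" by (metis add.commute add_Suc less_iff_Suc_add plus_1_eq_Suc)
  define d where "d s = m s - m (Suc s)" for s
  have E: "E2 m s = d s - d (Suc s)" for s by (simp add: E2_def d_def)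
  have eq: "(\<Sum>s\<in>{a..<c}. real (s + 1) * E2 m s)
     = real (a + 1) * d a - real (a + 1 + L) * d (a + 1 + L) + (\<Sum>s\<in>{a + 1..<a + 1 + L}. d s)"
    unfolding c E by (rule tele_eq)
  have tl: "(\<Sum>s\<in>{a + 1..<a + 1 + L}. d s) = m (a + 1) - m (a + 1 + L)"
  proof -
    have "(\<Sum>s\<in>{a + 1..<a + 1 + L}. (- m) (Suc s) - (- m) s) = (- m) (a + 1 + L) - (- m) (a + 1)"
      by (rule sum_Suc_diff') simp
    then show ?thesis by (simp add: d_def)
  qed
  have h1: "real (a + 1) * d a \<le> 2 * U" using hD[of a] by (simp add: d_def)
  have h2: "0 \<le> real (a + 1 + L) * d (a + 1 + L)" using hdec by (simp add: d_def)
  have h3: "m (a + 1) \<le> U" using hU by simp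
  have h4: "0 \<le> m (a + 1 + L)" by (rule hpos)
  show ?thesis using eq tl h1 h2 h3 h4 by linarith
next
  case False
  then show ?thesis using U_nonneg by simp
qed

lemma G_up:
  assumes c: "0 < c"
  shows "(\<Sum>s\<le>2 * b. real (s + 1) * \<bar>E2 (ramp a b (\<lambda>s. m s / c)) s\<bar>) \<le> 8 * U / c"
proof -
  define u where "u s = m s / c" for s
  have b1: "1 \<le> b" using ab by simp
  have mid: "(\<Sum>s\<in>{a..<b - 1}. real (s + 1) * \<bar>E2 u s\<bar>) \<le> 3 * U / c"
  proof -
    have Eu: "E2 u s = E2 m s / c" for s
      by (simp add: E2_def u_def diff_divide_distrib add_divide_distrib)
    have "real (s + 1) * \<bar>E2 u s\<bar> = real (s + 1) * E2 m s / c" for s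
      unfolding Eu using c hconv[of s] by simp
    then have "(\<Sum>s\<in>{a..<b - 1}. real (s + 1) * \<bar>E2 u s\<bar>) = (\<Sum>s\<in>{a..<b - 1}. real (s + 1) * E2 m s / c)"
      by simp
    also have "\<dots> = (\<Sum>s\<in>{a..<b - 1}. real (s + 1) * E2 m s) / c"
      by (rule sum_divide_distrib[symmetric])
    also have "\<dots> \<le> 3 * U / c" using tele_m[of "b - 1"] c by (simp add: divide_right_mono)
    finally show ?thesis .
  qed
  have junc: "real b * \<bar>u (b - 1) - 2 * u b + u b * (real b - 1) / real b\<bar> \<le> 3 * U / c"
  proof -
    have eq: "u (b - 1) - 2 * u b + u b * (real b - 1) / real b = (u (b - 1) - u b) - u b / real b"
      using b1 by (simp add: field_simps)
    have "m b \<le> m (b - 1)" using hdec[of "b - 1"] b1 by simp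
    then have d0: "0 \<le> u (b - 1) - u b" using c by (simp add: u_def divide_right_mono)
    have ub0: "0 \<le> u b" using hpos c by (simp add: u_def)
    have "real b * \<bar>(u (b - 1) - u b) - u b / real b\<bar> \<le> real b * ((u (b - 1) - u b) + u b / real b)"
    proof (rule mult_left_mono)
      have "0 \<le> u b / real b" using ub0 by simp
      then show "\<bar>(u (b - 1) - u b) - u b / real b\<bar> \<le> (u (b - 1) - u b) + u b / real b"
        using d0 by (simp only: abs_le_iff) linarith
    qed simp
    also have "\<dots> = (real b * (m (b - 1) - m b) + m b) / c"
      using b1 c by (simp add: u_def field_simps)
    also have "real b * (m (b - 1) - m b) \<le> 2 * U"
      using hD[of "b - 1"] ab b1 by (simp add: of_nat_diff)
    also have "m b \<le> U" using hU ab by simp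
    finally have F: "real b * \<bar>(u (b - 1) - u b) - u b / real b\<bar> \<le> (2 * U + U) / c"
      using c by (simp add: divide_right_mono)
    have "(2 * U + U) / c = 3 * U / c" by simp
    then show ?thesis unfolding eq using F by linarith
  qed
  have kink: "2 * \<bar>u b\<bar> \<le> 2 * U / c"
    using hpos[of b] hU[of b] ab c by (simp add: u_def divide_right_mono)
  have "(\<Sum>s\<le>2 * b. real (s + 1) * \<bar>E2 (ramp a b u) s\<bar>) \<le> 3 * U / c + 3 * U / c + 2 * U / c"
    using ramp_sum[OF ab, of u] mid junc kink by linarith
  then show ?thesis by (simp add: u_def[abs_def] field_simps)
qed

lemma inv_E2_bound:
  fixes x y z L :: real
  assumes m0: "0 < x" "0 < y" "0 < z" and L: "0 < L" "L \<le> x" "L \<le> y" "L \<le> z"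
    and e: "0 \<le> x - 2 * y + z" and d: "0 \<le> x - y" "0 \<le> y - z"
  shows "\<bar>1 / x - 2 / y + 1 / z\<bar> \<le> (x - 2 * y + z) / L\<^sup>2 + (x - y) * ((x - y) + (y - z)) / L ^ 3"
proof -
  have id: "1 / x - 2 / y + 1 / z = (1 / y) * ((x - y) * ((x - y) + (y - z)) / (x * z) - (x - 2 * y + z) / z)"
    using m0 by (simp add: field_simps)
  have t1: "(1 / y) * ((x - 2 * y + z) / z) \<le> (x - 2 * y + z) / L\<^sup>2"
  proof -
    have "(1 / y) * ((x - 2 * y + z) / z) = (x - 2 * y + z) / (y * z)" by simp
    also have "\<dots> \<le> (x - 2 * y + z) / (L * L)"
      using L e m0 by (intro divide_left_mono mult_mono) auto
    finally show ?thesis by (simp add: power2_eq_square)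
  qed
  have t2: "(1 / y) * ((x - y) * ((x - y) + (y - z)) / (x * z)) \<le> (x - y) * ((x - y) + (y - z)) / L ^ 3"
  proof -
    have nn: "0 \<le> (x - y) * ((x - y) + (y - z))" using d by simp
    have "(1 / y) * ((x - y) * ((x - y) + (y - z)) / (x * z)) = (x - y) * ((x - y) + (y - z)) / (y * (x * z))" by simp
    also have "\<dots> \<le> (x - y) * ((x - y) + (y - z)) / (L * (L * L))"
      using L nn m0 by (intro divide_left_mono mult_mono) (auto intro: mult_pos_pos)
    finally show ?thesis by (simp add: power3_eq_cube)
  qed
  have a1: "0 \<le> (1 / y) * ((x - 2 * y + z) / z)" using m0 e by simp
  have a2: "0 \<le> (1 / y) * ((x - y) * ((x - y) + (y - z)) / (x * z))" using m0 d by simp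
  have "\<bar>1 / x - 2 / y + 1 / z\<bar> \<le> (1 / y) * ((x - 2 * y + z) / z) + (1 / y) * ((x - y) * ((x - y) + (y - z)) / (x * z))"
    unfolding id using a1 a2 by (simp add: right_diff_distrib abs_le_iff)
  then show ?thesis using t1 t2 by linarith
qed

lemma G_lo:
  assumes c: "0 \<le> c" and L0: "0 < L" and hL: "\<And>s. s \<le> b \<Longrightarrow> L \<le> m s"
  shows "(\<Sum>s\<le>2 * b. real (s + 1) * \<bar>E2 (ramp a b (\<lambda>s. c / m s)) s\<bar>)
     \<le> c * (5 * U / L\<^sup>2 + 4 * U\<^sup>2 / L ^ 3 + 3 / L)"
proof -
  define v where "v s = c / m s" for s
  have b1: "1 \<le> b" using ab by simp
  define d where "d s = m s - m (Suc s)" for s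
  have dnn: "0 \<le> d s" for s using hdec by (simp add: d_def)
  have mpos: "s \<le> b \<Longrightarrow> 0 < m s" for s using hL L0 by (meson less_le_trans)
  have pt: "real (s + 1) * \<bar>E2 v s\<bar> \<le> c * (real (s + 1) * E2 m s / L\<^sup>2 + 2 * U * (d s + d (Suc s)) / L ^ 3)"
    if s: "s \<in> {a..<b - 1}" for s
  proof -
    have s2: "Suc (Suc s) \<le> b" "a \<le> s" using s by auto
    have "E2 v s = c * (1 / m s - 2 / m (Suc s) + 1 / m (Suc (Suc s)))"
      by (simp add: E2_def v_def field_simps)
    then have "\<bar>E2 v s\<bar> = c * \<bar>1 / m s - 2 / m (Suc s) + 1 / m (Suc (Suc s))\<bar>"
      using c by (simp add: abs_mult)
    also have "\<dots> \<le> c * (E2 m s / L\<^sup>2 + d s * (d s + d (Suc s)) / L ^ 3)"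
      using inv_E2_bound[of "m s" "m (Suc s)" "m (Suc (Suc s))" L] mpos hL s2 L0 hconv[of s] dnn[of s] dnn[of "Suc s"] c
      by (intro mult_left_mono) (auto simp: E2_def d_def)
    finally have "real (s + 1) * \<bar>E2 v s\<bar> \<le> real (s + 1) * (c * (E2 m s / L\<^sup>2 + d s * (d s + d (Suc s)) / L ^ 3))"
      by (intro mult_left_mono) auto
    also have "\<dots> = c * (real (s + 1) * E2 m s / L\<^sup>2 + (real (s + 1) * d s) * (d s + d (Suc s)) / L ^ 3)"
      by (simp add: algebra_simps)
    also have "\<dots> \<le> c * (real (s + 1) * E2 m s / L\<^sup>2 + 2 * U * (d s + d (Suc s)) / L ^ 3)"
    proof -
      have "(real (s + 1) * d s) * (d s + d (Suc s)) \<le> (2 * U) * (d s + d (Suc s))"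
        using hD[OF s2(2)] dnn[of s] dnn[of "Suc s"] by (intro mult_right_mono) (auto simp: d_def)
      then show ?thesis using c L0 by (intro mult_left_mono add_left_mono divide_right_mono) auto
    qed
    finally show ?thesis .
  qed
  have mid: "(\<Sum>s\<in>{a..<b - 1}. real (s + 1) * \<bar>E2 v s\<bar>) \<le> c * (3 * U / L\<^sup>2 + 4 * U\<^sup>2 / L ^ 3)"
  proof -
    have "(\<Sum>s\<in>{a..<b - 1}. real (s + 1) * \<bar>E2 v s\<bar>)
       \<le> (\<Sum>s\<in>{a..<b - 1}. c * (real (s + 1) * E2 m s / L\<^sup>2 + 2 * U * (d s + d (Suc s)) / L ^ 3))"
      by (intro sum_mono pt)
    also have "\<dots> = (\<Sum>s\<in>{a..<b - 1}. (c / L\<^sup>2) * (real (s + 1) * E2 m s) + (c * 2 * U / L ^ 3) * (d s + d (Suc s)))"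
      by (intro sum.cong refl) (simp add: field_simps)
    also have "\<dots> = (c / L\<^sup>2) * (\<Sum>s\<in>{a..<b - 1}. real (s + 1) * E2 m s) + (c * 2 * U / L ^ 3) * (\<Sum>s\<in>{a..<b - 1}. d s + d (Suc s))"
      by (subst sum.distrib) (simp only: sum_distrib_left)
    also have "\<dots> = c * ((\<Sum>s\<in>{a..<b - 1}. real (s + 1) * E2 m s) / L\<^sup>2 + 2 * U * (\<Sum>s\<in>{a..<b - 1}. d s + d (Suc s)) / L ^ 3)"
      by (simp add: field_simps)
    also have "\<dots> \<le> c * (3 * U / L\<^sup>2 + 2 * U * (2 * U) / L ^ 3)"
    proof -
      have S1: "(\<Sum>s\<in>{a..<b - 1}. real (s + 1) * E2 m s) \<le> 3 * U" by (rule tele_m)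
      have S2: "(\<Sum>s\<in>{a..<b - 1}. d s + d (Suc s)) \<le> 2 * U"
      proof (cases "a \<le> b - 1")
        case True
        have T1: "(\<Sum>s\<in>{a..<b - 1}. d s) = m a - m (b - 1)"
        proof -
          have "(\<Sum>s\<in>{a..<b - 1}. (- m) (Suc s) - (- m) s) = (- m) (b - 1) - (- m) a"
            by (rule sum_Suc_diff'[OF True])
          then show ?thesis by (simp add: d_def)
        qed
        have T2: "(\<Sum>s\<in>{a..<b - 1}. d (Suc s)) = m (Suc a) - m b"
        proof -
          have "(\<Sum>s\<in>{a..<b - 1}. (- m) (Suc (Suc s)) - (- m) (Suc s)) = (- m) (Suc (b - 1)) - (- m) (Suc a)"
            by (rule sum_Suc_diff'[OF True, of "\<lambda>s. (- m) (Suc s)"])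
          then show ?thesis using b1 by (simp add: d_def)
        qed
        have "m a \<le> U" "m (Suc a) \<le> U" using hU by auto
        then show ?thesis using T1 T2 hpos[of "b - 1"] hpos[of b] by (simp add: sum.distrib)
      next
        case False then show ?thesis using U_nonneg by simp
      qed
      show ?thesis using S1 S2 c L0 U_nonneg
        by (intro mult_left_mono add_mono divide_right_mono mult_left_mono) auto
    qed
    finally show ?thesis by (simp add: power2_eq_square)
  qed
  have mb: "0 < m b" "L \<le> m b" "0 < m (b - 1)" "L \<le> m (b - 1)" using mpos hL by auto
  have junc: "real b * \<bar>v (b - 1) - 2 * v b + v b * (real b - 1) / real b\<bar> \<le> c * (2 * U / L\<^sup>2 + 1 / L)"
  proof -
    have eq: "v (b - 1) - 2 * v b + v b * (real b - 1) / real b = - ((v b - v (b - 1)) + v b / real b)"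
      using b1 by (simp add: field_simps)
    have vd: "v b - v (b - 1) = c * (m (b - 1) - m b) / (m (b - 1) * m b)"
      using mb by (simp add: v_def field_simps)
    have dnn': "0 \<le> m (b - 1) - m b" using hdec[of "b - 1"] b1 by simp
    have v1: "0 \<le> v b - v (b - 1)" unfolding vd using c dnn' mb by simp
    have v2: "0 \<le> v b" using c mb by (simp add: v_def)
    have nn: "0 \<le> (v b - v (b - 1)) + v b / real b" using v1 v2 by simp
    have "real b * \<bar>v (b - 1) - 2 * v b + v b * (real b - 1) / real b\<bar> = real b * ((v b - v (b - 1)) + v b / real b)"
      unfolding eq abs_minus_cancel using nn by simp
    also have "\<dots> = real b * (v b - v (b - 1)) + v b"
      using b1 by (simp add: field_simps)
    also have "real b * (v b - v (b - 1)) = c * (real b * (m (b - 1) - m b)) / (m (b - 1) * m b)"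
      unfolding vd by simp
    also have "\<dots> \<le> c * (2 * U) / (L * L)"
    proof -
      have hD': "real b * (m (b - 1) - m b) \<le> 2 * U" using hD[of "b - 1"] ab b1 by (simp add: of_nat_diff)
      have num: "c * (real b * (m (b - 1) - m b)) \<le> c * (2 * U)" by (rule mult_left_mono[OF hD' c])
      have den: "L * L \<le> m (b - 1) * m b" using mb L0 by (intro mult_mono) auto
      have "c * (real b * (m (b - 1) - m b)) / (m (b - 1) * m b) \<le> c * (2 * U) / (m (b - 1) * m b)"
        by (rule divide_right_mono[OF num]) (use mb in simp)
      also have "\<dots> \<le> c * (2 * U) / (L * L)"
        by (rule divide_left_mono[OF den]) (use c U_nonneg mb L0 in auto)
      finally show ?thesis .
    qed
    also have "v b \<le> c / L" unfolding v_def using c mb L0 by (intro divide_left_mono) auto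
    finally show ?thesis by (simp add: power2_eq_square field_simps)
  qed
  have kink: "2 * \<bar>v b\<bar> \<le> c * (2 / L)"
  proof -
    have "v b \<le> c / L" unfolding v_def using c mb L0 by (intro divide_left_mono) auto
    moreover have "0 \<le> v b" using c mb by (simp add: v_def)
    ultimately have "2 * \<bar>v b\<bar> \<le> 2 * (c / L)" by simp
    also have "2 * (c / L) = c * (2 / L)" by simp
    finally show ?thesis .
  qed
  have "(\<Sum>s\<le>2 * b. real (s + 1) * \<bar>E2 (ramp a b v) s\<bar>)
     \<le> c * (3 * U / L\<^sup>2 + 4 * U\<^sup>2 / L ^ 3) + c * (2 * U / L\<^sup>2 + 1 / L) + c * (2 / L)"
    using ramp_sum[OF ab, of v] mid junc kink by linarith
  also have "\<dots> = c * (5 * U / L\<^sup>2 + 4 * U\<^sup>2 / L ^ 3 + 3 / L)"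
    by (simp add: field_simps)
  finally show ?thesis by (simp add: v_def[abs_def])
qed

end

lemma pt_basic:
  fixes x :: real assumes "0 \<le> x" "x \<le> 1"
  shows "real (s + 1) * x ^ s * (1 - x) \<le> 1"
proof -
  have "1 - x ^ (s + 1) = (1 - x) * (\<Sum>i<s + 1. x ^ (s + 1 - Suc i))"
    by (rule one_diff_power_eq')
  moreover have "real (s + 1) * x ^ s \<le> (\<Sum>i<s + 1. x ^ (s + 1 - Suc i))"
  proof -
    have "x ^ s \<le> x ^ (s + 1 - Suc i)" if "i < s + 1" for i
      using assms that by (intro power_decreasing) auto
    then have "(\<Sum>i<s + 1. x ^ s) \<le> (\<Sum>i<s + 1. x ^ (s + 1 - Suc i))" by (intro sum_mono) auto
    then show ?thesis by simp
  qed
  ultimately have "real (s + 1) * x ^ s * (1 - x) \<le> 1 - x ^ (s + 1)"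
    using assms by (metis mult.commute mult_left_mono diff_ge_0_iff_ge)
  moreover have "0 \<le> x ^ (s + 1)" using assms by simp
  ultimately show ?thesis by linarith
qed

lemma pt_d:
  fixes x :: real assumes "0 \<le> x" "x \<le> 1"
  shows "real (s + 1) * (x ^ (2 * s + 1) - x ^ (2 * s + 3)) \<le> 2 * x ^ (s + 1)"
proof -
  have eq: "x ^ (2 * s + 1) - x ^ (2 * s + 3) = x ^ (s + 1) * (1 + x) * (x ^ s * (1 - x))"
  proof -
    have e1: "2 * s + 1 = (s + 1) + s" by simp
    have p1: "x ^ (2 * s + 1) = x ^ (s + 1) * x ^ s"
      unfolding e1 by (rule power_add)
    have e3: "2 * s + 3 = ((s + 1) + s) + 2" by simp
    have p3: "x ^ (2 * s + 3) = x ^ (s + 1) * x ^ s * (x * x)"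
      unfolding e3 power_add by (simp add: power2_eq_square)
    show ?thesis unfolding p1 p3 by (simp add: algebra_simps)
  qed
  have "real (s + 1) * (x ^ (s + 1) * (1 + x) * (x ^ s * (1 - x)))
      = x ^ (s + 1) * (1 + x) * (real (s + 1) * x ^ s * (1 - x))" by (simp add: mult_ac)
  also have "\<dots> \<le> x ^ (s + 1) * 2 * 1"
    using assms pt_basic[OF assms, of s] by (intro mult_mono) auto
  finally show ?thesis unfolding eq by simp
qed

context wt begin

lemma mom_nonneg: "0 \<le> moment mu y"
  unfolding moment_def by (rule set_int_nonneg) (simp add: mu_nonneg)

lemma mom_mono: "y \<le> y' \<Longrightarrow> moment mu y' \<le> moment mu y"
  unfolding moment_def
proof (rule set_integral_mono[OF mom_int mom_int])
  fix x :: real assume y: "y \<le> y'" and x: "x \<in> {0..<1}"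
  have "x ^ y' \<le> x ^ y" using x y by (intro power_decreasing) auto
  then show "x ^ y' * mu x \<le> x ^ y * mu x" using mu_nonneg[OF x] by (intro mult_right_mono)
qed

definition mm where "mm s = moment mu (2 * s + 1)"

lemma mm_diff: "mm s - mm (Suc s) = (LBINT x:{0..<1}. (x ^ (2 * s + 1) - x ^ (2 * s + 3)) * mu x)"
proof -
  have e: "2 * Suc s + 1 = 2 * s + 3" by simp
  have "mm s - mm (Suc s) = moment mu (2 * s + 1) - moment mu (2 * s + 3)" unfolding mm_def e ..
  also have "\<dots> = (LBINT x:{0..<1}. x ^ (2 * s + 1) * mu x - x ^ (2 * s + 3) * mu x)"
    unfolding moment_def by (rule set_integral_diff(2)[OF mom_int mom_int, symmetric])
  also have "\<dots> = (LBINT x:{0..<1}. (x ^ (2 * s + 1) - x ^ (2 * s + 3)) * mu x)"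
    by (simp only: left_diff_distrib)
  finally show ?thesis .
qed

lemma mm_diff_int: "set_integrable lborel {0..<1} (\<lambda>x. (x ^ (2 * s + 1) - x ^ (2 * s + 3)) * mu x)"
  using set_integral_diff(1)[OF mom_int[of "2 * s + 1"] mom_int[of "2 * s + 3"]] by (simp add: left_diff_distrib)

lemma mm_dec: "mm (Suc s) \<le> mm s"
  unfolding mm_def by (rule mom_mono) simp

lemma mm_pos: "0 \<le> mm s" unfolding mm_def by (rule mom_nonneg)

lemma mm_conv: "0 \<le> E2 mm s"
proof -
  have "mm (Suc s) - mm (Suc (Suc s)) \<le> mm s - mm (Suc s)"
    unfolding mm_diff
  proof (rule set_integral_mono[OF mm_diff_int mm_diff_int])
    fix x :: real assume x: "x \<in> {0..<1}"
    have "x ^ (2 * s + 3) \<le> x ^ (2 * s + 1)" using x by (intro power_decreasing) auto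
    then have b: "0 \<le> x ^ (2 * s + 1) - x ^ (2 * s + 3)" by simp
    have "x ^ (2 * Suc s + 1) - x ^ (2 * Suc s + 3) = x\<^sup>2 * (x ^ (2 * s + 1) - x ^ (2 * s + 3))"
      by (simp add: power_add[symmetric] algebra_simps)
    also have "\<dots> \<le> 1 * (x ^ (2 * s + 1) - x ^ (2 * s + 3))"
      using x b by (intro mult_right_mono) (auto simp: power_le_one)
    finally show "(x ^ (2 * Suc s + 1) - x ^ (2 * Suc s + 3)) * mu x \<le> (x ^ (2 * s + 1) - x ^ (2 * s + 3)) * mu x"
      using mu_nonneg[OF x] by (intro mult_right_mono) auto
  qed
  then show ?thesis by (simp add: E2_def)
qed

lemma mm_D: "real (s + 1) * (mm s - mm (Suc s)) \<le> 2 * moment mu (s + 1)"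
proof -
  have "real (s + 1) * (mm s - mm (Suc s)) = (LBINT x:{0..<1}. real (s + 1) * ((x ^ (2 * s + 1) - x ^ (2 * s + 3)) * mu x))"
    unfolding mm_diff by simp
  also have "\<dots> \<le> (LBINT x:{0..<1}. 2 * (x ^ (s + 1) * mu x))"
  proof (rule set_integral_mono)
    show "set_integrable lborel {0..<1} (\<lambda>x. real (s + 1) * ((x ^ (2 * s + 1) - x ^ (2 * s + 3)) * mu x))"
      using mm_diff_int by simp
    show "set_integrable lborel {0..<1} (\<lambda>x. 2 * (x ^ (s + 1) * mu x))"
      using mom_int[of "s + 1"] by (intro set_integrable_mult_right)
    fix x :: real assume x: "x \<in> {0..<1}"
    have "real (s + 1) * (x ^ (2 * s + 1) - x ^ (2 * s + 3)) \<le> 2 * x ^ (s + 1)"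
      using x by (intro pt_d) auto
    then show "real (s + 1) * ((x ^ (2 * s + 1) - x ^ (2 * s + 3)) * mu x) \<le> 2 * (x ^ (s + 1) * mu x)"
      using mu_nonneg[OF x] by (metis mult.assoc mult_right_mono)
  qed
  also have "\<dots> = 2 * moment mu (s + 1)" by (simp add: moment_def)
  finally show ?thesis .
qed

end

context wt begin

lemma M0: "M 0 = 1"
  by (simp add: M_eq r0)

lemma M_prev_le: "M_prev w K n \<le> M n"
  by (cases n) (auto simp: M_prev_def intro: M_mono)

lemma ab_less: "M_prev w K n < M (n + N)"
proof (cases n)
  case 0 then show ?thesis using M_facts(1)[of N] by (simp add: M_prev_def)
next
  case (Suc n')
  have "M n' < M (Suc n')" by (rule M_strict)
  also have "M (Suc n') \<le> M (n + N)" using Suc by (intro M_mono) simp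
  finally show ?thesis using Suc by (simp add: M_prev_def)
qed

lemma B1: "M_prev w K n + 1 \<le> y \<Longrightarrow> moment mu y \<le> (Cup / Q) * Q ^ n"
proof (cases n)
  case 0
  assume "M_prev w K n + 1 \<le> y"
  then have "real (M 0) \<le> real y" using M0 0 by (simp add: M_prev_def)
  then have "moment mu y \<le> Cup * Q ^ 0" by (rule mom_upper)
  also have "\<dots> \<le> Cup / Q" using Cup_pos Q_pos Q_less by (simp add: field_simps)
  finally show ?thesis using 0 by simp
next
  case (Suc n')
  assume "M_prev w K n + 1 \<le> y"
  then have "real (M n') \<le> real y" using Suc by (simp add: M_prev_def)
  then have "moment mu y \<le> Cup * Q ^ n'" by (rule mom_upper)
  also have "\<dots> = (Cup / Q) * Q ^ n" using Suc Q_pos by simp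
  finally show ?thesis .
qed

definition j0 where "j0 = (SOME j. 6 \<le> Cl ^ j)"

lemma j0: "6 \<le> Cl ^ j0"
proof -
  obtain j where "6 < Cl ^ j" using real_arch_pow[OF Cl(1)] by blast
  then have "\<exists>j. 6 \<le> Cl ^ j" by (intro exI[of _ j]) simp
  then show ?thesis unfolding j0_def by (rule someI_ex)
qed

lemma M_j0: "6 * real (M n) \<le> real (M (n + j0))"
proof -
  have "6 * real (M n) \<le> Cl ^ j0 * real (M n)" using j0 by (intro mult_right_mono) auto
  then show ?thesis using M_lac_pow[where n=n and j=j0] by linarith
qed

lemma B2: "(Alo / 2) * Q ^ (n + j0) \<le> moment mu (M n)"
  by (rule mom_lower) (use M_j0[of n] in simp)

lemma B2': "s \<le> M (n + N) \<Longrightarrow> (Alo / 2) * Q ^ (n + N + j0) \<le> mm s"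
proof -
  assume s: "s \<le> M (n + N)"
  have "2 * real (2 * s + 1) \<le> 6 * real (M (n + N))" using s M_facts(1)[of "n + N"] by simp
  also have "\<dots> \<le> real (M (n + N + j0))" by (rule M_j0)
  finally show ?thesis unfolding mm_def by (rule mom_lower)
qed

lemma B3: "moment mu (M n) \<le> Cup * Q ^ n"
  by (rule mom_upper) simp

lemma muM_pos: "0 < moment mu (M n)"
proof -
  have "0 < (Alo / 2) * Q ^ (n + j0)" using Alo_pos Q_pos by simp
  then show ?thesis using B2[of n] by linarith
qed


lemma adm_dil: "admissible_banach X nX \<Longrightarrow> \<exists>C>0. \<forall>f\<in>X. \<forall>\<zeta>. cmod \<zeta> \<le> 1 \<longrightarrow>
          diskr (\<lambda>z. f (\<zeta> * z)) \<in> X \<and> nX (diskr (\<lambda>z. f (\<zeta> * z))) \<le> C * nX f"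
  unfolding admissible_banach_def by (elim conjE) assumption

lemma hadamard_pf:
  assumes cz: "\<And>k. b \<le> k \<Longrightarrow> coeff p k * tcoef g k = 0"
  shows "hadamard p g = pf (\<lambda>k. coeff p k * tcoef g k) b"
proof -
  define c where "c k = coeff p k * tcoef g k" for k
  define d where "d = Suc (degree p)"
  have "hadamard p g = pf c d"
    unfolding hadamard_def pf_def c_def d_def by (simp add: lessThan_Suc_atMost)
  also have "\<dots> = pf c (max b d)"
    by (rule pf_extend[symmetric]) (auto simp: c_def d_def coeff_eq_0)
  also have "\<dots> = pf c b"
    by (rule pf_extend) (auto simp: c_def cz)
  finally show ?thesis by (simp add: c_def[abs_def])
qed

lemma I_op_pf: "I_op m (pf c b) = pf (\<lambda>k. c k * complex_of_real (moment m (2 * k + 1))) b"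
proof
  fix z
  have "I_op m (pf c b) z = (\<Sum>n. tcoef (pf c b) n * complex_of_real (moment m (2 * n + 1)) * z ^ n)"
    by (simp add: I_op_def)
  also have "\<dots> = (\<Sum>n\<in>{..<b}. tcoef (pf c b) n * complex_of_real (moment m (2 * n + 1)) * z ^ n)"
    by (rule suminf_finite) (auto simp: tcoef_pf)
  also have "\<dots> = (\<Sum>n\<in>{..<b}. c n * complex_of_real (moment m (2 * n + 1)) * z ^ n)"
    by (intro sum.cong refl) (simp add: tcoef_pf)
  also have "\<dots> = pf (\<lambda>k. c k * complex_of_real (moment m (2 * k + 1))) b z"
    by (simp add: pf_def)
  finally show "I_op m (pf c b) z = pf (\<lambda>k. c k * complex_of_real (moment m (2 * k + 1))) b z" .
qed

lemma diskr_scal: "diskr (\<lambda>z. a * f z) = (\<lambda>z. a * diskr f z)"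
  by (auto simp: diskr_def)


lemma G_hyps:
  assumes "a = M_prev w K n"
  shows "\<And>s. a \<le> s \<Longrightarrow> mm s \<le> (Cup / Q) * Q ^ n"
    and "\<And>s. a \<le> s \<Longrightarrow> real (s + 1) * (mm s - mm (Suc s)) \<le> 2 * ((Cup / Q) * Q ^ n)"
proof -
  fix s assume s: "a \<le> s"
  show "mm s \<le> (Cup / Q) * Q ^ n" unfolding mm_def by (rule B1) (use s assms in simp)
  have "real (s + 1) * (mm s - mm (Suc s)) \<le> 2 * moment mu (s + 1)" by (rule mm_D)
  also have "moment mu (s + 1) \<le> (Cup / Q) * Q ^ n" by (rule B1) (use s assms in simp)
  finally show "real (s + 1) * (mm s - mm (Suc s)) \<le> 2 * ((Cup / Q) * Q ^ n)" by simp
qed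

lemma upper_I:
  assumes hX: "admissible_banach X nX"
    and hC: "\<forall>f\<in>X. \<forall>\<zeta>. cmod \<zeta> \<le> 1 \<longrightarrow> diskr (\<lambda>z. f (\<zeta> * z)) \<in> X \<and> nX (diskr (\<lambda>z. f (\<zeta> * z))) \<le> C3 * nX f"
    and C3: "0 < C3"
    and a: "a = M_prev w K n" and b: "b = M (n + N)"
    and cz: "\<And>k. k < a \<Longrightarrow> c k = 0" "\<And>k. b \<le> k \<Longrightarrow> c k = 0"
  shows "nX (diskr (pf (\<lambda>k. c k * complex_of_real (mm k)) b))
     \<le> (C3 * (8 * (Cup / Q) / ((Alo / 2) * Q ^ j0))) * (moment mu (M n) * nX (diskr (pf c b)))"
proof -
  define \<mu>M where "\<mu>M = moment mu (M n)"
  define U where "U = (Cup / Q) * Q ^ n"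
  have \<mu>M: "0 < \<mu>M" unfolding \<mu>M_def by (rule muM_pos)
  have ab: "a < b" unfolding a b by (rule ab_less)
  define u where "u s = mm s / \<mu>M" for s
  define lam where "lam = ramp a b u"
  have eq: "pf (\<lambda>k. c k * complex_of_real (mm k)) b = (\<lambda>z. complex_of_real \<mu>M * pf (\<lambda>j. complex_of_real (lam j) * c j) b z)"
  proof -
    have H: "c j * complex_of_real (mm j) = complex_of_real \<mu>M * (complex_of_real (lam j) * c j)" if j: "j < b" for j
    proof (cases "c j = 0")
      case False
      then have "a \<le> j" using cz(1)[of j] by linarith
      then have "lam j = mm j / \<mu>M" unfolding lam_def u_def using j by (subst ramp_mid[OF ab]) auto
      then have "mm j = \<mu>M * lam j" using \<mu>M by simp
      then have "complex_of_real (mm j) = complex_of_real \<mu>M * complex_of_real (lam j)" by simp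
      then show ?thesis by (simp add: mult_ac)
    qed simp
    show ?thesis unfolding pf_def
    proof (rule ext)
      fix z
      show "(\<Sum>j<b. c j * complex_of_real (mm j) * z ^ j) = complex_of_real \<mu>M * (\<Sum>j<b. complex_of_real (lam j) * c j * z ^ j)"
        unfolding sum_distrib_left
      proof (rule sum.cong[OF refl])
        fix j assume "j \<in> {..<b}"
        then have "j < b" by simp
        from H[OF this] show "c j * complex_of_real (mm j) * z ^ j = complex_of_real \<mu>M * (complex_of_real (lam j) * c j * z ^ j)"
          by (metis mult.assoc)
      qed
    qed
  qed
  have p: "diskr (pf (\<lambda>j. complex_of_real (lam j) * c j) b) \<in> X" by (rule X_pf[OF hX])
  define G where "G = nX (diskr (pf (\<lambda>j. complex_of_real (lam j) * c j) b))"
  define S where "S = (\<Sum>s\<le>2 * b. real (s + 1) * \<bar>E2 lam s\<bar>)"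
  define nf where "nf = nX (diskr (pf c b))"
  define R where "R = (Cup / Q) / ((Alo / 2) * Q ^ j0)"
  have nf: "0 \<le> nf" unfolding nf_def by (rule adm_nonneg[OF hX X_pf[OF hX]])
  have e1: "nX (diskr (pf (\<lambda>k. c k * complex_of_real (mm k)) b)) = \<mu>M * G"
    unfolding eq diskr_scal G_def using adm_scal[OF hX p, of "complex_of_real \<mu>M"] \<mu>M by simp
  have e2: "G \<le> C3 * S * nf"
    unfolding G_def S_def nf_def
    by (rule mult_lemma[OF hX hC]) (use ramp_rep[OF ab] in \<open>auto simp: lam_def\<close>)
  have e3: "S \<le> 8 * U / \<mu>M"
    unfolding S_def lam_def u_def
    by (rule G_up[OF ab mm_dec mm_conv mm_pos _ _ \<mu>M]) (use G_hyps[OF a] in \<open>auto simp: U_def\<close>)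
  have e4: "U \<le> R * \<mu>M"
  proof -
    have B: "(Alo / 2) * Q ^ j0 * Q ^ n \<le> \<mu>M" using B2[of n] by (simp add: \<mu>M_def power_add mult_ac)
    have pos: "0 < (Alo / 2) * Q ^ j0" using Alo_pos Q_pos by simp
    have "U = R * ((Alo / 2) * Q ^ j0 * Q ^ n)"
      using pos Alo_pos Q_pos by (simp add: U_def R_def field_simps)
    also have "\<dots> \<le> R * \<mu>M"
      using B pos Cup_pos Q_pos by (intro mult_left_mono) (auto simp: R_def)
    finally show ?thesis .
  qed
  have "nX (diskr (pf (\<lambda>k. c k * complex_of_real (mm k)) b)) \<le> \<mu>M * (C3 * S * nf)"
    unfolding e1 using e2 \<mu>M by (intro mult_left_mono) auto
  also have "\<dots> \<le> \<mu>M * (C3 * (8 * U / \<mu>M) * nf)"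
    using e3 C3 nf \<mu>M by (intro mult_left_mono mult_right_mono) auto
  also have "\<dots> = C3 * 8 * U * nf" using \<mu>M by (simp add: field_simps)
  also have "\<dots> \<le> C3 * 8 * (R * \<mu>M) * nf" using e4 C3 nf by (intro mult_right_mono mult_left_mono) auto
  also have "\<dots> = (C3 * (8 * R)) * (\<mu>M * nf)" by (simp add: mult_ac)
  finally show ?thesis by (simp add: R_def \<mu>M_def nf_def)
qed


definition KL :: "nat \<Rightarrow> real" where "KL N = Cup * (5 * (Cup / Q) / ((Alo / 2) * Q ^ (N + j0))\<^sup>2
   + 4 * (Cup / Q)\<^sup>2 / ((Alo / 2) * Q ^ (N + j0)) ^ 3 + 3 / ((Alo / 2) * Q ^ (N + j0)))"

lemma KL_nonneg: "0 \<le> KL N"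
  using Cup_pos Q_pos Alo_pos by (simp add: KL_def)

lemma lower_I:
  assumes hX: "admissible_banach X nX"
    and hC: "\<forall>f\<in>X. \<forall>\<zeta>. cmod \<zeta> \<le> 1 \<longrightarrow> diskr (\<lambda>z. f (\<zeta> * z)) \<in> X \<and> nX (diskr (\<lambda>z. f (\<zeta> * z))) \<le> C3 * nX f"
    and C3: "0 < C3"
    and a: "a = M_prev w K n" and b: "b = M (n + N)"
    and cz: "\<And>k. k < a \<Longrightarrow> c k = 0" "\<And>k. b \<le> k \<Longrightarrow> c k = 0"
  shows "moment mu (M n) * nX (diskr (pf c b))
     \<le> (C3 * KL N) * nX (diskr (pf (\<lambda>k. c k * complex_of_real (mm k)) b))"
proof -
  define \<mu>M where "\<mu>M = moment mu (M n)"
  define U where "U = (Cup / Q) * Q ^ n"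
  define A' where "A' = (Alo / 2) * Q ^ (N + j0)"
  define L where "L = A' * Q ^ n"
  have A': "0 < A'" using Alo_pos Q_pos by (simp add: A'_def)
  have L0: "0 < L" using A' Q_pos by (simp add: L_def)
  have hL: "s \<le> b \<Longrightarrow> L \<le> mm s" for s
    using B2'[of s n N] b by (simp add: L_def A'_def power_add mult_ac)
  have \<mu>M: "0 < \<mu>M" unfolding \<mu>M_def by (rule muM_pos)
  have ab: "a < b" unfolding a b by (rule ab_less)
  define v where "v s = \<mu>M / mm s" for s
  define lam where "lam = ramp a b v"
  define c' where "c' k = c k * complex_of_real (mm k)" for k
  have H: "complex_of_real (lam j) * c' j = complex_of_real \<mu>M * c j" if j: "j < b" for j
  proof (cases "c j = 0")
    case False
    then have "a \<le> j" using cz(1)[of j] by linarith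
    then have "lam j = \<mu>M / mm j" unfolding lam_def v_def using j by (subst ramp_mid[OF ab]) auto
    moreover have "0 < mm j" using hL[of j] L0 j by simp
    ultimately have "lam j * mm j = \<mu>M" by simp
    then have "complex_of_real (lam j) * complex_of_real (mm j) = complex_of_real \<mu>M"
      by (metis of_real_mult)
    then show ?thesis unfolding c'_def by (metis mult.assoc mult.commute)
  qed (simp add: c'_def)
  have eq: "pf (\<lambda>j. complex_of_real (lam j) * c' j) b = (\<lambda>z. complex_of_real \<mu>M * pf c b z)"
    unfolding pf_def
  proof (rule ext)
    fix z
    show "(\<Sum>j<b. complex_of_real (lam j) * c' j * z ^ j) = complex_of_real \<mu>M * (\<Sum>j<b. c j * z ^ j)"
      unfolding sum_distrib_left
    proof (rule sum.cong[OF refl])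
      fix j assume "j \<in> {..<b}"
      then have "j < b" by simp
      from H[OF this] show "complex_of_real (lam j) * c' j * z ^ j = complex_of_real \<mu>M * (c j * z ^ j)"
        by (metis mult.assoc)
    qed
  qed
  have p: "diskr (pf c b) \<in> X" by (rule X_pf[OF hX])
  define S where "S = (\<Sum>s\<le>2 * b. real (s + 1) * \<bar>E2 lam s\<bar>)"
  define nF where "nF = nX (diskr (pf c' b))"
  have nF: "0 \<le> nF" unfolding nF_def by (rule adm_nonneg[OF hX X_pf[OF hX]])
  have e1: "nX (diskr (pf (\<lambda>j. complex_of_real (lam j) * c' j) b)) = \<mu>M * nX (diskr (pf c b))"
    unfolding eq diskr_scal using adm_scal[OF hX p, of "complex_of_real \<mu>M"] \<mu>M by simp
  have e2: "nX (diskr (pf (\<lambda>j. complex_of_real (lam j) * c' j) b)) \<le> C3 * S * nF"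
    unfolding S_def nF_def
    by (rule mult_lemma[OF hX hC]) (use ramp_rep[OF ab] in \<open>auto simp: lam_def\<close>)
  have e3: "S \<le> \<mu>M * (5 * U / L\<^sup>2 + 4 * U\<^sup>2 / L ^ 3 + 3 / L)"
    unfolding S_def lam_def v_def
    by (rule G_lo[OF ab mm_dec mm_conv mm_pos _ _ _ L0 hL]) (use G_hyps[OF a] \<mu>M in \<open>auto simp: U_def\<close>)
  have e4: "\<mu>M * (5 * U / L\<^sup>2 + 4 * U\<^sup>2 / L ^ 3 + 3 / L) \<le> KL N"
  proof -
    have br: "0 \<le> 5 * U / L\<^sup>2 + 4 * U\<^sup>2 / L ^ 3 + 3 / L"
      using L0 Cup_pos Q_pos by (simp add: U_def)
    have "\<mu>M \<le> Cup * Q ^ n" unfolding \<mu>M_def by (rule B3)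
    then have "\<mu>M * (5 * U / L\<^sup>2 + 4 * U\<^sup>2 / L ^ 3 + 3 / L) \<le> Cup * Q ^ n * (5 * U / L\<^sup>2 + 4 * U\<^sup>2 / L ^ 3 + 3 / L)"
      using br by (rule mult_right_mono)
    also have "\<dots> = Cup * (5 * (Cup / Q) / A'\<^sup>2 + 4 * (Cup / Q)\<^sup>2 / A' ^ 3 + 3 / A')"
      using A' Q_pos by (simp add: U_def L_def field_simps power2_eq_square power3_eq_cube)
    also have "\<dots> = KL N" by (simp add: KL_def A'_def)
    finally show ?thesis .
  qed
  have "\<mu>M * nX (diskr (pf c b)) \<le> C3 * S * nF" using e1 e2 by simp
  also have "\<dots> \<le> C3 * KL N * nF"
    using e3 e4 C3 nF by (intro mult_right_mono mult_left_mono) auto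
  finally show ?thesis by (simp add: \<mu>M_def nF_def c'_def[abs_def])
qed


lemma le_bigC: "x \<le> c1 * y \<Longrightarrow> 0 \<le> y \<Longrightarrow> c1 \<le> C \<Longrightarrow> x \<le> C * (y::real)"
  by (meson mult_right_mono order_trans)

lemma main_est:
  fixes N :: nat and P :: "nat \<Rightarrow> complex poly" and X :: "(complex \<Rightarrow> complex) set"
    and nX :: "(complex \<Rightarrow> complex) \<Rightarrow> real"
  assumes hsupp: "\<forall>n j. j < M_prev w K n \<or> M_seq w K (n + N) \<le> j \<longrightarrow> coeff (P n) j = 0"
    and hX: "admissible_banach X nX"
  shows "\<exists>C>0. \<forall>n g. g holomorphic_on ball 0 1 \<longrightarrow>
           diskr (hadamard (P n) g) \<in> X \<and>
           diskr (I_op mu (hadamard (P n) g)) \<in> X \<and>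
           nX (diskr (I_op mu (hadamard (P n) g)))
             \<le> C * (moment mu (M_seq w K n) * nX (diskr (hadamard (P n) g))) \<and>
           moment mu (M_seq w K n) * nX (diskr (hadamard (P n) g))
             \<le> C * nX (diskr (I_op mu (hadamard (P n) g))) \<and>
           moment mu (M_seq w K n) * nX (diskr (hadamard (P n) g))
             \<le> C * (K powr (- \<alpha> * real n) * nX (diskr (hadamard (P n) g))) \<and>
           K powr (- \<alpha> * real n) * nX (diskr (hadamard (P n) g))
             \<le> C * (moment mu (M_seq w K n) * nX (diskr (hadamard (P n) g)))"
proof -
  obtain C3 where C3: "C3 > 0" and hC: "\<forall>f\<in>X. \<forall>\<zeta>. cmod \<zeta> \<le> 1 \<longrightarrow>
          diskr (\<lambda>z. f (\<zeta> * z)) \<in> X \<and> nX (diskr (\<lambda>z. f (\<zeta> * z))) \<le> C3 * nX f"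
    using adm_dil[OF hX] by blast
  define Cu where "Cu = C3 * (8 * (Cup / Q) / ((Alo / 2) * Q ^ j0))"
  define Cl' where "Cl' = C3 * KL N"
  define Ck2 where "Ck2 = 1 / ((Alo / 2) * Q ^ j0)"
  define C where "C = Cu + Cl' + Cup + Ck2"
  have pos: "0 \<le> Cu" "0 \<le> Cl'" "0 < Cup" "0 \<le> Ck2"
    using C3 Cup_pos Q_pos Alo_pos KL_nonneg[of N] by (auto simp: Cu_def Cl'_def Ck2_def)
  have Cge: "Cu \<le> C" "Cl' \<le> C" "Cup \<le> C" "Ck2 \<le> C" using pos by (auto simp: C_def)
  have "0 < C" using pos by (simp add: C_def)
  moreover have "\<forall>n g. g holomorphic_on ball 0 1 \<longrightarrow>
           diskr (hadamard (P n) g) \<in> X \<and>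
           diskr (I_op mu (hadamard (P n) g)) \<in> X \<and>
           nX (diskr (I_op mu (hadamard (P n) g)))
             \<le> C * (moment mu (M_seq w K n) * nX (diskr (hadamard (P n) g))) \<and>
           moment mu (M_seq w K n) * nX (diskr (hadamard (P n) g))
             \<le> C * nX (diskr (I_op mu (hadamard (P n) g))) \<and>
           moment mu (M_seq w K n) * nX (diskr (hadamard (P n) g))
             \<le> C * (K powr (- \<alpha> * real n) * nX (diskr (hadamard (P n) g))) \<and>
           K powr (- \<alpha> * real n) * nX (diskr (hadamard (P n) g))
             \<le> C * (moment mu (M_seq w K n) * nX (diskr (hadamard (P n) g)))"
  proof (intro allI impI)
    fix n and g :: "complex \<Rightarrow> complex"
    define a where "a = M_prev w K n"
    define b where "b = M (n + N)"
    define c where "c k = coeff (P n) k * tcoef g k" for k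
    have cz: "\<And>k. k < a \<Longrightarrow> c k = 0" "\<And>k. b \<le> k \<Longrightarrow> c k = 0"
      using hsupp by (auto simp: c_def a_def b_def)
    have hf: "hadamard (P n) g = pf c b"
      unfolding c_def by (rule hadamard_pf) (use cz(2) in \<open>simp add: c_def\<close>)
    have hI: "I_op mu (pf c b) = pf (\<lambda>k. c k * complex_of_real (mm k)) b"
      unfolding I_op_pf mm_def ..
    define \<mu>M where "\<mu>M = moment mu (M n)"
    define nf where "nf = nX (diskr (pf c b))"
    define nI where "nI = nX (diskr (pf (\<lambda>k. c k * complex_of_real (mm k)) b))"
    have nf: "0 \<le> nf" unfolding nf_def by (rule adm_nonneg[OF hX X_pf[OF hX]])
    have nI: "0 \<le> nI" unfolding nI_def by (rule adm_nonneg[OF hX X_pf[OF hX]])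
    have \<mu>M: "0 < \<mu>M" unfolding \<mu>M_def by (rule muM_pos)
    have i3: "nI \<le> Cu * (\<mu>M * nf)"
      unfolding nI_def Cu_def \<mu>M_def nf_def
      by (rule upper_I[OF hX hC C3 a_def b_def cz])
    have i4: "\<mu>M * nf \<le> Cl' * nI"
      unfolding nI_def Cl'_def \<mu>M_def nf_def
      by (rule lower_I[OF hX hC C3 a_def b_def cz])
    have i5: "\<mu>M * nf \<le> Cup * (K powr (- \<alpha> * real n) * nf)"
    proof -
      have "\<mu>M \<le> Cup * Q ^ n" unfolding \<mu>M_def by (rule B3)
      then have "\<mu>M * nf \<le> (Cup * Q ^ n) * nf" using nf by (rule mult_right_mono)
      then show ?thesis by (simp add: Qpow mult_ac)
    qed
    have i6: "K powr (- \<alpha> * real n) * nf \<le> Ck2 * (\<mu>M * nf)"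
    proof -
      have B: "(Alo / 2) * Q ^ j0 * Q ^ n \<le> \<mu>M" using B2[of n] by (simp add: \<mu>M_def power_add mult_ac)
      have p: "0 < (Alo / 2) * Q ^ j0" using Alo_pos Q_pos by simp
      have "Q ^ n \<le> Ck2 * \<mu>M"
        using B p by (simp add: Ck2_def field_simps)
      then have "Q ^ n * nf \<le> (Ck2 * \<mu>M) * nf" using nf by (rule mult_right_mono)
      then show ?thesis by (simp add: Qpow mult_ac)
    qed
    note m1 = X_pf[OF hX, of c b]
    note m2 = X_pf[OF hX, of "\<lambda>k. c k * complex_of_real (mm k)" b]
    have f3: "nI \<le> C * (\<mu>M * nf)" by (rule le_bigC[OF i3 _ Cge(1)]) (use \<mu>M nf in auto)
    have f4: "\<mu>M * nf \<le> C * nI" by (rule le_bigC[OF i4 nI Cge(2)])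
    have f5: "\<mu>M * nf \<le> C * (K powr (- \<alpha> * real n) * nf)" by (rule le_bigC[OF i5 _ Cge(3)]) (use nf K1 in auto)
    have f6: "K powr (- \<alpha> * real n) * nf \<le> C * (\<mu>M * nf)" by (rule le_bigC[OF i6 _ Cge(4)]) (use \<mu>M nf in auto)
    show "diskr (hadamard (P n) g) \<in> X \<and>
           diskr (I_op mu (hadamard (P n) g)) \<in> X \<and>
           nX (diskr (I_op mu (hadamard (P n) g)))
             \<le> C * (moment mu (M_seq w K n) * nX (diskr (hadamard (P n) g))) \<and>
           moment mu (M_seq w K n) * nX (diskr (hadamard (P n) g))
             \<le> C * nX (diskr (I_op mu (hadamard (P n) g))) \<and>
           moment mu (M_seq w K n) * nX (diskr (hadamard (P n) g))
             \<le> C * (K powr (- \<alpha> * real n) * nX (diskr (hadamard (P n) g))) \<and>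
           K powr (- \<alpha> * real n) * nX (diskr (hadamard (P n) g))
             \<le> C * (moment mu (M_seq w K n) * nX (diskr (hadamard (P n) g)))"
      unfolding hf hI \<mu>M_def[symmetric] nf_def[symmetric] nI_def[symmetric]
      by (intro conjI m1 m2 f3 f4 f5 f6)
  qed
  ultimately show ?thesis by blast
qed

end

theorem proposition3p2:
  fixes \<omega> :: "real \<Rightarrow> real" and N :: nat and \<alpha> K :: real
    and P :: "nat \<Rightarrow> complex poly"
    and X :: "(complex \<Rightarrow> complex) set" and nX :: "(complex \<Rightarrow> complex) \<Rightarrow> real"
  defines "\<mu> \<equiv> (\<lambda>r. \<omega> r * omega_hat \<omega> r powr (\<alpha> - 1))"
  assumes hw: "D_hat \<omega>"
    and hN: "1 \<le> N"
    and h\<alpha>: "\<alpha> > 0"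
    and hK: "K > 1"
    and hlac: "lacunary (M_seq \<omega> K)"
    and hsum: "\<forall>f. f holomorphic_on ball 0 1 \<longrightarrow>
                 (\<forall>z\<in>ball 0 1. (\<lambda>n. hadamard (P n) f z) sums f z)"
    and hsupp: "\<forall>n j. j < M_prev \<omega> K n \<or> M_seq \<omega> K (n + N) \<le> j \<longrightarrow> coeff (P n) j = 0"
    and hX: "admissible_banach X nX"
  shows "\<exists>C>0. \<forall>n g. g holomorphic_on ball 0 1 \<longrightarrow>
           diskr (hadamard (P n) g) \<in> X \<and>
           diskr (I_op \<mu> (hadamard (P n) g)) \<in> X \<and>
           nX (diskr (I_op \<mu> (hadamard (P n) g)))
             \<le> C * (moment \<mu> (M_seq \<omega> K n) * nX (diskr (hadamard (P n) g))) \<and>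
           moment \<mu> (M_seq \<omega> K n) * nX (diskr (hadamard (P n) g))
             \<le> C * nX (diskr (I_op \<mu> (hadamard (P n) g))) \<and>
           moment \<mu> (M_seq \<omega> K n) * nX (diskr (hadamard (P n) g))
             \<le> C * (K powr (- \<alpha> * real n) * nX (diskr (hadamard (P n) g))) \<and>
           K powr (- \<alpha> * real n) * nX (diskr (hadamard (P n) g))
             \<le> C * (moment \<mu> (M_seq \<omega> K n) * nX (diskr (hadamard (P n) g)))"
proof -
  interpret wt \<omega> K \<alpha> using hw hK h\<alpha> hlac by unfold_locales
  have mueq: "\<mu> = mu" by (rule ext) (simp add: \<mu>_def mu_def)
  show ?thesis unfolding mueq by (rule main_est[OF hsupp hX])
qed

end
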